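(* Let $n\ge 3$ and $k\ge 3$. For every $\alpha\in\mathbf{A}_k(n)\setminus\{r_{n,k}\}$, at least one of $\mathrm{LastNonMax}(\alpha)$, $\mathrm{LastSymbol}(\alpha)$, $\mathrm{FirstNonMin}(\alpha)$, $\mathrm{SecondLastNonMax}(\alpha)$ lies in $\mathbf{A}_k(n)$, so $\mathrm{Par}(\alpha)\in\mathbf{A}_k(n)$ is well defined. Moreover, for every $\alpha\in\mathbf{A}_k(n)$ there is $t\ge 0$ with $\mathrm{Par}^t(\alpha)=r_{n,k}$. Consequently the relation $\alpha\mapsto\mathrm{Par}(\alpha)$ defines a rooted tree with vertex set $\mathbf{A}_k(n)$ and root $r_{n,k}$, in which each non-root $\alpha$ and its parent $\mathrm{Par}(\alpha)$ have rotations that differ in exactly one (first) position.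
   Context: Let $\Sigma=\{0,1,\dots,k-1\}$. Strings are compared lexicographically ($\alpha<\beta$ if $\alpha$ is a proper prefix of $\beta$, or $\alpha$ has the smaller symbol at the first index where they differ). For $\alpha=a_1\cdots a_n$, $\alpha^R=a_n\cdots a_1$; $[\alpha]$ is the set of rotations of $\alpha$. $\alpha$ is a necklace if it is the lexicographically smallest element of $[\alpha]$; a bracelet if it is the lexicographically smallest element of $[\alpha]\cup[\alpha^R]$. A necklace $\alpha$ is symmetric if $\alpha^R\in[\alpha]$, asymmetric otherwise. $\mathbf{A}_k(n)$ is the set of asymmetric bracelets of length $n$ over $\Sigma$. $r_{n,k}=0^{n-2}(k-2)(k-1)$. Operations on $\alpha=a_1\cdots a_n$: $\mathrm{LastNonMax}(\alpha)=a_1\cdots a_{j-1}(a_j+1)(k-1)^{n-j}$, where $j$ is the index of the last symbol different from $k-1$; $\mathrm{LastSymbol}(\alpha)$ is the necklace (smallest rotation) of $a_1\cdots a_{n-1}((a_n+1)\bmod k)$; $\mathrm{FirstNonMin}(\alpha)=0^{i-1}(a_i-1)a_{i+1}\cdots a_n$, where $i$ is the index of the first nonzero symbol; $\mathrm{SecondLastNonMax}(\alpha)=a_1\cdots a_{\ell-1}(a_\ell+1)a_{\ell+1}\cdots a_n$, where $\ell$ is the index of the second-last symbol different from $k-1$. Parent rule: for $\alpha\in\mathbf{A}_k(n)\setminus\{r_{n,k}\}$, $\mathrm{Par}(\alpha)$ is the first string in the list $\langle \mathrm{LastNonMax}(\alpha),\mathrm{LastSymbol}(\alpha),\mathrm{FirstNonMin}(\alpha),\mathrm{SecondLastNonMax}(\alpha)\rangle$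 that belongs to $\mathbf{A}_k(n)$. $\mathrm{Par}^t$ denotes $t$-fold iteration, $\mathrm{Par}^0(\alpha)=\alpha$. *)

theory Defs
  imports Main "HOL-Library.List_Lexorder"
begin

text \<open>Strings over \<Sigma> = {0,...,k-1} are lists of naturals; positions are 0-based.
  The order on lists (from List_Lexorder) is lexicographic, with a proper prefix
  being smaller.\<close>

definition strings :: "nat \<Rightarrow> nat \<Rightarrow> nat list set" where
  "strings k n = {xs. length xs = n \<and> set xs \<subseteq> {..<k}}"

definition rotations :: "nat list \<Rightarrow> nat list set" where
  "rotations xs = {rotate i xs | i. i < length xs} \<union> {xs}"

definition is_necklace :: "nat list \<Rightarrow> bool" where
  "is_necklace xs \<longleftrightarrow> (\<forall>ys \<in> rotations xs. xs \<le> ys)"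

definition is_bracelet :: "nat list \<Rightarrow> bool" where
  "is_bracelet xs \<longleftrightarrow> (\<forall>ys \<in> rotations xs \<union> rotations (rev xs). xs \<le> ys)"

definition symmetric_necklace :: "nat list \<Rightarrow> bool" where
  "symmetric_necklace xs \<longleftrightarrow> is_necklace xs \<and> rev xs \<in> rotations xs"

definition asym_bracelets :: "nat \<Rightarrow> nat \<Rightarrow> nat list set" where
  "asym_bracelets k n =
     {xs \<in> strings k n. is_bracelet xs \<and> is_necklace xs \<and> \<not> symmetric_necklace xs}"

definition root_string :: "nat \<Rightarrow> nat \<Rightarrow> nat list" where
  "root_string n k = replicate (n - 2) 0 @ [k - 2, k - 1]"

definition necklace_of :: "nat list \<Rightarrow> nat list" where
  "necklace_of xs = Min (rotations xs)"

definition nonmax_idx :: "nat \<Rightarrow> nat list \<Rightarrow> nat set" where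
  "nonmax_idx k xs = {j. j < length xs \<and> xs ! j \<noteq> k - 1}"

definition last_non_max :: "nat \<Rightarrow> nat list \<Rightarrow> nat list option" where
  "last_non_max k xs =
     (if nonmax_idx k xs = {} then None
      else let j = Max (nonmax_idx k xs) in
        Some (take j xs @ [xs ! j + 1] @ replicate (length xs - j - 1) (k - 1)))"

definition last_symbol :: "nat \<Rightarrow> nat list \<Rightarrow> nat list" where
  "last_symbol k xs = necklace_of (butlast xs @ [(last xs + 1) mod k])"

definition first_non_min :: "nat list \<Rightarrow> nat list option" where
  "first_non_min xs =
     (if {i. i < length xs \<and> xs ! i \<noteq> 0} = {} then None
      else let i = Min {i. i < length xs \<and> xs ! i \<noteq> 0} in
        Some (replicate i 0 @ [xs ! i - 1] @ drop (Suc i) xs))"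

definition second_last_non_max :: "nat \<Rightarrow> nat list \<Rightarrow> nat list option" where
  "second_last_non_max k xs =
     (if card (nonmax_idx k xs) < 2 then None
      else let l = Max (nonmax_idx k xs - {Max (nonmax_idx k xs)}) in
        Some (xs[l := xs ! l + 1]))"

definition par_candidates :: "nat \<Rightarrow> nat list \<Rightarrow> nat list option list" where
  "par_candidates k xs =
     [last_non_max k xs, Some (last_symbol k xs), first_non_min xs, second_last_non_max k xs]"

definition in_set_opt :: "nat list set \<Rightarrow> nat list option \<Rightarrow> bool" where
  "in_set_opt A o' \<longleftrightarrow> (case o' of Some b \<Rightarrow> b \<in> A | None \<Rightarrow> False)"

definition par :: "nat \<Rightarrow> nat \<Rightarrow> nat list \<Rightarrow> nat list" where
  "par k n xs =
     (case find (in_set_opt (asym_bracelets k n)) (par_candidates k xs) of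
        Some (Some b) \<Rightarrow> b
      | _ \<Rightarrow> xs)"

end

theory Submission
  imports Defs
begin



lemma app_less:
  fixes a b x y :: "nat list"
  assumes "length a = length b"
  shows "(a @ x < b @ y) \<longleftrightarrow> (a < b \<or> (a = b \<and> x < y))"
  using assms
proof (induction a arbitrary: b)
  case Nil then show ?case by simp
next
  case (Cons h a)
  then obtain g b' where b: "b = g # b'" by (cases b) auto
  with Cons show ?case by auto
qed

lemma app_le:
  fixes a b x y :: "nat list"
  assumes "length a = length b"
  shows "(a @ x \<le> b @ y) \<longleftrightarrow> (a < b \<or> (a = b \<and> x \<le> y))"
  using app_less[OF assms, of x y] assms
  by (auto simp: order_le_less)

lemma app_lessI: "length a = length b \<Longrightarrow> (a::nat list) < b \<Longrightarrow> a @ x < b @ y"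
  using app_less by blast

lemma app_less_same: "(a @ (x::nat list) < a @ y) \<longleftrightarrow> x < y"
  using app_less[of a a x y] by auto

lemma app_le_same: "(a @ (x::nat list) \<le> a @ y) \<longleftrightarrow> x \<le> y"
  using app_le[of a a x y] by auto

lemma app_less_prefix:
  fixes a b x y :: "nat list"
  assumes "length a = length b" "a @ x < b @ y"
  shows "a \<le> b"
  using app_less[OF assms(1)] assms(2) by auto

lemma app_le_prefix:
  fixes a b x y :: "nat list"
  assumes "length a = length b" "a @ x \<le> b @ y"
  shows "a \<le> b"
  using app_le[OF assms(1)] assms(2) by auto

lemma rep0_le: "length ys = m \<Longrightarrow> replicate m (0::nat) \<le> ys"
proof (induction m arbitrary: ys)
  case 0 then show ?case by simp
next
  case (Suc m) then show ?case by (cases ys) auto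
qed

lemma zeros_less:
  fixes ys xs :: "nat list"
  assumes "length ys = m + length xs" "take m ys \<noteq> replicate m 0"
  shows "replicate m 0 @ xs < ys"
proof -
  have ys: "ys = take m ys @ drop m ys" by simp
  have l: "length (take m ys) = m" using assms(1) by simp
  have "replicate m 0 \<le> take m ys" using rep0_le[of "take m ys" m] l by simp
  then have "replicate m 0 < take m ys" using assms(2) by (simp add: order_le_less)
  then show ?thesis using app_lessI[of "replicate m 0" "take m ys" xs "drop m ys"] l
    by (metis length_replicate ys)
qed

lemma zeros_prefix_le:
  fixes xs ys :: "nat list"
  assumes "xs \<le> ys" "length xs = length ys" "take m ys = replicate m 0" "m \<le> length ys"
  shows "take m xs = replicate m 0"
proof (rule ccontr)
  assume "take m xs \<noteq> replicate m 0"
  moreover have "ys = replicate m 0 @ drop m ys" using assms(3)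
    by (metis append_take_drop_id)
  ultimately have "ys < xs" using zeros_less[of xs m "drop m ys"] assms by simp
  then show False using assms(1) by simp
qed




lemma rot_mem_aux: "xs = u @ w \<Longrightarrow> w @ u \<in> rotations xs"
proof (cases "w = []")
  case True assume "xs = u @ w" then show ?thesis using True by (simp add: rotations_def)
next
  case False
  assume xs: "xs = u @ w"
  then have lt: "length u < length xs" using False by simp
  moreover have "rotate (length u) xs = w @ u" using xs lt
    by (simp add: rotate_drop_take)
  ultimately have "w @ u \<in> {rotate i xs |i. i < length xs}" by (metis (mono_tags, lifting) mem_Collect_eq)
  then show ?thesis by (simp add: rotations_def)
qed

lemma rotations_split: "rotations xs = {w @ u | u w. xs = u @ w}"
proof (rule set_eqI, rule iffI)
  fix ys assume "ys \<in> rotations xs"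
  then consider i where "i < length xs" "ys = rotate i xs" | "ys = xs"
    unfolding rotations_def by blast
  then have "\<exists>u w. ys = w @ u \<and> xs = u @ w"
  proof cases
    case 1
    then have "ys = drop i xs @ take i xs" by (simp add: rotate_drop_take)
    then show ?thesis by (metis append_take_drop_id)
  next
    case 2 then show ?thesis by auto
  qed
  then show "ys \<in> {w @ u | u w. xs = u @ w}" by blast
next
  fix ys assume "ys \<in> {w @ u | u w. xs = u @ w}"
  then show "ys \<in> rotations xs" using rot_mem_aux by blast
qed

lemma rotI: "xs = u @ w \<Longrightarrow> w @ u \<in> rotations xs"
  by (auto simp: rotations_split)

lemma rotE: "ys \<in> rotations xs \<Longrightarrow> (\<And>u w. xs = u @ w \<Longrightarrow> ys = w @ u \<Longrightarrow> P) \<Longrightarrow> P"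
  by (auto simp: rotations_split)

lemma rot_self: "xs \<in> rotations xs"
  by (simp add: rotations_def)

lemma rot_length: "ys \<in> rotations xs \<Longrightarrow> length ys = length xs"
  by (auto simp: rotations_split)

lemma rot_set: "ys \<in> rotations xs \<Longrightarrow> set ys = set xs"
  by (auto simp: rotations_split)

lemma finite_rotations: "finite (rotations xs)"
  by (simp add: rotations_def)

lemma rotations_rev: "rotations (rev xs) = rev ` rotations xs"
proof (rule set_eqI, rule iffI)
  fix ys assume "ys \<in> rotations (rev xs)"
  then obtain u w where uw: "rev xs = u @ w" "ys = w @ u" by (rule rotE)
  have "xs = rev w @ rev u" using uw(1) by (metis rev_append rev_rev_ident)
  then have "rev u @ rev w \<in> rotations xs" by (rule rotI)
  moreover have "ys = rev (rev u @ rev w)" using uw(2) by simp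
  ultimately show "ys \<in> rev ` rotations xs" by (rule rev_image_eqI)
next
  fix ys assume "ys \<in> rev ` rotations xs"
  then obtain zs where zs: "zs \<in> rotations xs" "ys = rev zs" by blast
  then obtain u w where uw: "xs = u @ w" "zs = w @ u" by (metis rotE)
  have "rev xs = rev w @ rev u" using uw by simp
  then have "rev u @ rev w \<in> rotations (rev xs)" by (rule rotI)
  then show "ys \<in> rotations (rev xs)" using zs uw by simp
qed

lemma rot_sub: "ys \<in> rotations xs \<Longrightarrow> rotations ys \<subseteq> rotations xs"
proof
  fix zs assume "ys \<in> rotations xs" "zs \<in> rotations ys"
  then obtain u w u' w' where xs: "xs = u @ w" "ys = w @ u" and ys: "ys = u' @ w'" "zs = w' @ u'"
    by (metis rotE)
  have "w @ u = u' @ w'" using xs ys by simp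
  then obtain us where "(w = u' @ us \<and> us @ u = w') \<or> (w @ us = u' \<and> u = us @ w')"
    unfolding append_eq_append_conv2 by blast
  then show "zs \<in> rotations xs"
  proof
    assume a: "w = u' @ us \<and> us @ u = w'"
    then have "xs = (u @ u') @ us" "zs = us @ (u @ u')" using xs ys by auto
    then show ?thesis using rotI by blast
  next
    assume a: "w @ us = u' \<and> u = us @ w'"
    then have "xs = us @ (w' @ w)" "zs = (w' @ w) @ us" using xs ys by auto
    then show ?thesis using rotI by blast
  qed
qed

lemma rot_sym: "ys \<in> rotations xs \<Longrightarrow> xs \<in> rotations ys"
  by (metis rotE rotI)

lemma rot_eq: "ys \<in> rotations xs \<Longrightarrow> rotations ys = rotations xs"
  using rot_sub rot_sym by blast

lemma inA_iff:
  "xs \<in> asym_bracelets k n \<longleftrightarrow> xs \<in> strings k n \<and> (\<forall>u w. xs = u @ w \<longrightarrow> xs \<le> w @ u)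
     \<and> (\<forall>u w. xs = u @ w \<longrightarrow> xs < rev u @ rev w)"
proof -
  have neck: "is_necklace xs \<longleftrightarrow> (\<forall>u w. xs = u @ w \<longrightarrow> xs \<le> w @ u)"
    unfolding is_necklace_def rotations_split by blast
  have revrot: "rotations (rev xs) = {rev u @ rev w | u w. xs = u @ w}"
  proof -
    have "rotations (rev xs) = rev ` {w @ u | u w. xs = u @ w}"
      using rotations_rev[of xs] rotations_split[of xs] by simp
    also have "... = {rev u @ rev w | u w. xs = u @ w}"
    proof (rule set_eqI, rule iffI)
      fix x assume "x \<in> rev ` {w @ u | u w. xs = u @ w}"
      then obtain u w where "xs = u @ w" "x = rev (w @ u)" by blast
      then have "xs = u @ w \<and> x = rev u @ rev w" by simp
      then show "x \<in> {rev u @ rev w | u w. xs = u @ w}" by blast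
    next
      fix x assume "x \<in> {rev u @ rev w | u w. xs = u @ w}"
      then obtain u w where "xs = u @ w" "x = rev (w @ u)" by auto
      then show "x \<in> rev ` {w @ u | u w. xs = u @ w}" by blast
    qed
    finally show ?thesis .
  qed
  have sym: "rev xs \<in> rotations xs \<longleftrightarrow> xs \<in> rotations (rev xs)"
    by (metis image_eqI rev_rev_ident rotations_rev rot_sym)
  have br: "is_bracelet xs \<longleftrightarrow> is_necklace xs \<and> (\<forall>ys \<in> rotations (rev xs). xs \<le> ys)"
    unfolding is_bracelet_def is_necklace_def by blast
  have "(\<forall>ys \<in> rotations (rev xs). xs \<le> ys) \<and> xs \<notin> rotations (rev xs) \<longleftrightarrow>
        (\<forall>ys \<in> rotations (rev xs). xs < ys)"
    by (metis order_le_less order_less_irrefl)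
  moreover have "(\<forall>ys \<in> rotations (rev xs). xs < ys) \<longleftrightarrow> (\<forall>u w. xs = u @ w \<longrightarrow> xs < rev u @ rev w)"
    unfolding revrot by blast
  ultimately show ?thesis
    unfolding asym_bracelets_def symmetric_necklace_def mem_Collect_eq br neck sym
    by blast
qed




definition rotn :: "nat \<Rightarrow> nat list \<Rightarrow> nat list" where
  "rotn i xs = drop i xs @ take i xs"

definition rrot :: "nat \<Rightarrow> nat list \<Rightarrow> nat list" where
  "rrot i xs = rev (take i xs) @ rev (drop i xs)"

lemma inA_idx:
  "xs \<in> asym_bracelets k n \<longleftrightarrow> xs \<in> strings k n \<and> (\<forall>i \<le> length xs. xs \<le> rotn i xs)
     \<and> (\<forall>i \<le> length xs. xs < rrot i xs)"
proof -
  have 1: "(\<forall>u w. xs = u @ w \<longrightarrow> xs \<le> w @ u) \<longleftrightarrow> (\<forall>i \<le> length xs. xs \<le> rotn i xs)"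
  proof
    assume H: "\<forall>u w. xs = u @ w \<longrightarrow> xs \<le> w @ u"
    show "\<forall>i \<le> length xs. xs \<le> rotn i xs"
      unfolding rotn_def using H by (metis append_take_drop_id)
  next
    assume H: "\<forall>i \<le> length xs. xs \<le> rotn i xs"
    show "\<forall>u w. xs = u @ w \<longrightarrow> xs \<le> w @ u"
    proof (intro allI impI)
      fix u w assume "xs = u @ w"
      then have "u = take (length u) xs" "w = drop (length u) xs" "length u \<le> length xs" by simp_all
      then show "xs \<le> w @ u" using H unfolding rotn_def by metis
    qed
  qed
  have 2: "(\<forall>u w. xs = u @ w \<longrightarrow> xs < rev u @ rev w) \<longleftrightarrow> (\<forall>i \<le> length xs. xs < rrot i xs)"
  proof
    assume H: "\<forall>u w. xs = u @ w \<longrightarrow> xs < rev u @ rev w"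
    show "\<forall>i \<le> length xs. xs < rrot i xs"
      unfolding rrot_def using H by (metis append_take_drop_id)
  next
    assume H: "\<forall>i \<le> length xs. xs < rrot i xs"
    show "\<forall>u w. xs = u @ w \<longrightarrow> xs < rev u @ rev w"
    proof (intro allI impI)
      fix u w assume "xs = u @ w"
      then have "u = take (length u) xs" "w = drop (length u) xs" "length u \<le> length xs" by simp_all
      then show "xs < rev u @ rev w" using H unfolding rrot_def by metis
    qed
  qed
  show ?thesis unfolding inA_iff 1 2 ..
qed

lemma inA_rotn: "xs \<in> asym_bracelets k n \<Longrightarrow> i \<le> length xs \<Longrightarrow> xs \<le> rotn i xs"
  using inA_idx by blast

lemma inA_rrot: "xs \<in> asym_bracelets k n \<Longrightarrow> i \<le> length xs \<Longrightarrow> xs < rrot i xs"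
  using inA_idx by blast

lemma inA_strings: "xs \<in> asym_bracelets k n \<Longrightarrow> xs \<in> strings k n"
  using inA_idx by blast

lemma inc_less:
  fixes P Q R T :: "nat list"
  assumes "length P \<ge> length R" "P @ e # Q < R @ e # T"
  shows "P @ Suc e # Q < R @ Suc e # T"
proof -
  define P1 where "P1 = take (length R) P"
  define P2 where "P2 = drop (length R) P"
  have P: "P = P1 @ P2" and l: "length P1 = length R" using assms(1) by (simp_all add: P1_def P2_def)
  have "P1 @ (P2 @ e # Q) < R @ (e # T)" using assms(2) P by simp
  then have c: "P1 < R \<or> (P1 = R \<and> P2 @ e # Q < e # T)" using app_less[OF l] by blast
  show ?thesis
  proof (cases "P1 < R")
    case True
    then have "P1 @ (P2 @ Suc e # Q) < R @ (Suc e # T)" using app_lessI[OF l] by blast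
    then show ?thesis using P by simp
  next
    case False
    then have eq: "P1 = R" and lt: "P2 @ e # Q < e # T" using c by auto
    have "P2 @ Suc e # Q < Suc e # T"
    proof (cases P2)
      case Nil then show ?thesis using lt by simp
    next
      case (Cons h P2')
      then have "h \<le> e" using lt by auto
      then show ?thesis using Cons by simp
    qed
    then show ?thesis using P eq app_less_same by simp
  qed
qed

lemma inc_le:
  fixes P Q R T :: "nat list"
  assumes "length P > length R" "P @ e # Q \<le> R @ e # T"
  shows "P @ Suc e # Q < R @ Suc e # T"
proof -
  define P1 where "P1 = take (length R) P"
  define P2 where "P2 = drop (length R) P"
  have P: "P = P1 @ P2" and l: "length P1 = length R" using assms(1) by (simp_all add: P1_def P2_def)
  have ne: "P2 \<noteq> []" using assms(1) by (simp add: P2_def)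
  have "P1 @ (P2 @ e # Q) \<le> R @ (e # T)" using assms(2) P by simp
  then have c: "P1 < R \<or> (P1 = R \<and> P2 @ e # Q \<le> e # T)" using app_le[OF l] by blast
  show ?thesis
  proof (cases "P1 < R")
    case True
    then have "P1 @ (P2 @ Suc e # Q) < R @ (Suc e # T)" using app_lessI[OF l] by blast
    then show ?thesis using P by simp
  next
    case False
    then have eq: "P1 = R" and lt: "P2 @ e # Q \<le> e # T" using c by auto
    obtain h P2' where "P2 = h # P2'" using ne by (cases P2) auto
    then have "h \<le> e" using lt by auto
    then have "P2 @ Suc e # Q < Suc e # T" using \<open>P2 = h # P2'\<close> by simp
    then show ?thesis using P eq app_less_same by simp
  qed
qed

lemma dec_less:
  fixes P Q R T :: "nat list"
  assumes "length R \<ge> length P" "P @ Suc e # Q < R @ Suc e # T"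
  shows "P @ e # Q < R @ e # T"
proof -
  define R1 where "R1 = take (length P) R"
  define R2 where "R2 = drop (length P) R"
  have R: "R = R1 @ R2" and l: "length P = length R1" using assms(1) by (simp_all add: R1_def R2_def)
  have "P @ (Suc e # Q) < R1 @ (R2 @ Suc e # T)" using assms(2) R by simp
  then have c: "P < R1 \<or> (P = R1 \<and> Suc e # Q < R2 @ Suc e # T)" using app_less[OF l] by blast
  show ?thesis
  proof (cases "P < R1")
    case True
    then have "P @ (e # Q) < R1 @ (R2 @ e # T)" using app_lessI[OF l] by blast
    then show ?thesis using R by simp
  next
    case False
    then have eq: "P = R1" and lt: "Suc e # Q < R2 @ Suc e # T" using c by auto
    have "e # Q < R2 @ e # T"
    proof (cases R2)
      case Nil then show ?thesis using lt by simp
    next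
      case (Cons h R2')
      then have "Suc e \<le> h" using lt by auto
      then show ?thesis using Cons by simp
    qed
    then show ?thesis using R eq app_less_same by simp
  qed
qed

lemma dec_le:
  fixes P Q R T :: "nat list"
  assumes "length R > length P" "P @ Suc e # Q \<le> R @ Suc e # T"
  shows "P @ e # Q < R @ e # T"
proof -
  define R1 where "R1 = take (length P) R"
  define R2 where "R2 = drop (length P) R"
  have R: "R = R1 @ R2" and l: "length P = length R1" using assms(1) by (simp_all add: R1_def R2_def)
  have ne: "R2 \<noteq> []" using assms(1) by (simp add: R2_def)
  have "P @ (Suc e # Q) \<le> R1 @ (R2 @ Suc e # T)" using assms(2) R by simp
  then have c: "P < R1 \<or> (P = R1 \<and> Suc e # Q \<le> R2 @ Suc e # T)" using app_le[OF l] by blast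
  show ?thesis
  proof (cases "P < R1")
    case True
    then have "P @ (e # Q) < R1 @ (R2 @ e # T)" using app_lessI[OF l] by blast
    then show ?thesis using R by simp
  next
    case False
    then have eq: "P = R1" and lt: "Suc e # Q \<le> R2 @ Suc e # T" using c by auto
    obtain h R2' where "R2 = h # R2'" using ne by (cases R2) auto
    then have "Suc e \<le> h" using lt by auto
    then have "e # Q < R2 @ e # T" using \<open>R2 = h # R2'\<close> by simp
    then show ?thesis using R eq app_less_same by simp
  qed
qed

lemma rotn_track:
  fixes P Q :: "nat list"
  assumes "i \<le> length P + length Q + 1"
  shows "\<exists>R T. (\<forall>x. rotn i (P @ x # Q) = R @ x # T) \<and>
     length R = (if i \<le> length P then length P - i else length P + length Q + 1 - i + length P)"
proof (cases "i \<le> length P")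
  case True
  then have "\<forall>x. rotn i (P @ x # Q) = drop i P @ x # (Q @ take i P)" by (simp add: rotn_def)
  then show ?thesis using True
    apply -
    apply (rule exI[of _ "drop i P"], rule exI[of _ "Q @ take i P"])
    by simp
next
  case False
  define j where "j = i - length P - 1"
  have i: "i = length P + 1 + j" using False j_def by simp
  have "\<forall>x. rotn i (P @ x # Q) = (drop j Q @ P) @ x # take j Q" using i by (simp add: rotn_def)
  then show ?thesis using False i assms
    apply -
    apply (rule exI[of _ "drop j Q @ P"], rule exI[of _ "take j Q"])
    by simp
qed

lemma rrot_track:
  fixes P Q :: "nat list"
  assumes "i \<le> length P + length Q + 1"
  shows "\<exists>R T. (\<forall>x. rrot i (P @ x # Q) = R @ x # T) \<and>
     length R = (if i \<le> length P then i + length Q else i - length P - 1)"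
proof (cases "i \<le> length P")
  case True
  then have "\<forall>x. rrot i (P @ x # Q) = (rev (take i P) @ rev Q) @ x # rev (drop i P)" by (simp add: rrot_def)
  then show ?thesis using True
    apply -
    apply (rule exI[of _ "rev (take i P) @ rev Q"], rule exI[of _ "rev (drop i P)"])
    by simp
next
  case False
  define j where "j = i - length P - 1"
  have i: "i = length P + 1 + j" using False j_def by simp
  have "\<forall>x. rrot i (P @ x # Q) = rev (take j Q) @ x # (rev P @ rev (drop j Q))" using i by (simp add: rrot_def)
  then show ?thesis using False i assms
    apply -
    apply (rule exI[of _ "rev (take j Q)"], rule exI[of _ "rev P @ rev (drop j Q)"])
    by simp
qed




lemma strings_iff: "xs \<in> strings k n \<longleftrightarrow> length xs = n \<and> (\<forall>x \<in> set xs. x < k)"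
  unfolding strings_def by auto

lemma take_ne_zeros: "j < m \<Longrightarrow> j < length xs \<Longrightarrow> xs ! j \<noteq> (0::nat) \<Longrightarrow> take m xs \<noteq> replicate m 0"
  by (metis nth_replicate nth_take)

lemma rotn_0[simp]: "rotn 0 xs = xs" by (simp add: rotn_def)
lemma rotn_len[simp]: "rotn (length xs) xs = xs" by (simp add: rotn_def)
lemma rotn_length[simp]: "length (rotn i xs) = length xs" by (simp add: rotn_def)
lemma rrot_length[simp]: "length (rrot i xs) = length xs" by (simp add: rrot_def)

lemma inc_A:
  fixes P Q :: "nat list"
  assumes A: "P @ e # Q \<in> asym_bracelets k n" and ek: "Suc e < k"
    and nx: "\<And>i. length P < i \<Longrightarrow> i < length P + length Q + 1 \<Longrightarrow> P @ Suc e # Q \<le> rotn i (P @ Suc e # Q)"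
    and rx: "\<And>i. i \<le> length P + length Q + 1 \<Longrightarrow>
              (if i \<le> length P then i + length Q else i - length P - 1) > length P \<Longrightarrow>
              P @ Suc e # Q < rrot i (P @ Suc e # Q)"
  shows "P @ Suc e # Q \<in> asym_bracelets k n"
proof -
  let ?a = "P @ e # Q" and ?b = "P @ Suc e # Q"
  have sa: "?a \<in> strings k n" using A inA_strings by blast
  have sb: "?b \<in> strings k n" using sa ek unfolding strings_iff by auto
  have len: "length ?b = length P + length Q + 1" by simp
  have N: "?b \<le> rotn i ?b" if i: "i \<le> length ?b" for i
  proof -
    consider "i = 0" | "0 < i" "i \<le> length P" | "length P < i" "i < length ?b" | "i = length ?b"
      using i by linarith
    then show ?thesis
    proof cases
      case 1 then show ?thesis by simp
    next
      case 2
      obtain R T where RT: "\<forall>x. rotn i (P @ x # Q) = R @ x # T"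
        and lR: "length R = (if i \<le> length P then length P - i else length P + length Q + 1 - i + length P)"
        using rotn_track[of i P Q] i by auto
      have "?a \<le> rotn i ?a" using inA_rotn[OF A] i by simp
      then have "?a \<le> R @ e # T" using RT by simp
      moreover have "length P > length R" using lR 2 by simp
      ultimately have "?b < R @ Suc e # T" using inc_le by blast
      then show ?thesis using RT by simp
    next
      case 3 then show ?thesis using nx by simp
    next
      case 4 then show ?thesis by (simp add: rotn_def)
    qed
  qed
  have Rv: "?b < rrot i ?b" if i: "i \<le> length ?b" for i
  proof -
    obtain R T where RT: "\<forall>x. rrot i (P @ x # Q) = R @ x # T"
      and lR: "length R = (if i \<le> length P then i + length Q else i - length P - 1)"
      using rrot_track[of i P Q] i by auto
    show ?thesis
    proof (cases "length R \<le> length P")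
      case True
      have "?a < rrot i ?a" using inA_rrot[OF A] i by simp
      then have "?a < R @ e # T" using RT by simp
      then have "?b < R @ Suc e # T" using inc_less True by blast
      then show ?thesis using RT by simp
    next
      case False
      then show ?thesis using rx[of i] i lR by simp
    qed
  qed
  show ?thesis unfolding inA_idx using sb N Rv by blast
qed

lemma dec_A:
  fixes Q :: "nat list"
  assumes A: "replicate z 0 @ Suc e # Q \<in> asym_bracelets k n" and e0: "e \<noteq> 0"
  shows "replicate z 0 @ e # Q \<in> asym_bracelets k n"
proof -
  let ?P = "replicate z (0::nat)"
  let ?a = "?P @ Suc e # Q" and ?b = "?P @ e # Q"
  have sa: "?a \<in> strings k n" using A inA_strings by blast
  have sb: "?b \<in> strings k n" using sa unfolding strings_iff by auto
  have zl: "?b < R @ e # T" if "length R < z" "length (R @ e # T) = length ?b" for R T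
  proof -
    have "take z (R @ e # T) \<noteq> replicate z 0"
      using take_ne_zeros[of "length R" z "R @ e # T"] that e0 by simp
    then show ?thesis using zeros_less[of "R @ e # T" z "e # Q"] that by simp
  qed
  have N: "?b \<le> rotn i ?b" if i: "i \<le> length ?b" for i
  proof -
    obtain R T where RT: "\<forall>x. rotn i (?P @ x # Q) = R @ x # T"
      and lR: "length R = (if i \<le> z then z - i else z + length Q + 1 - i + z)"
      using rotn_track[of i ?P Q] i by auto
    have lRT: "length (R @ e # T) = length ?b" using RT rotn_length by metis
    consider "length R < z" | "length R = z" | "length R > z" by linarith
    then show ?thesis
    proof cases
      case 1 then show ?thesis using zl lRT RT by (simp add: order_less_imp_le)
    next
      case 2
      then have "i = 0 \<or> i = length ?b" using lR i by (auto split: if_splits)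
      then show ?thesis by (auto simp: rotn_def)
    next
      case 3
      have "?a \<le> rotn i ?a" using inA_rotn[OF A] i by simp
      then have "?a \<le> R @ Suc e # T" using RT by simp
      then have "?b < R @ e # T" using dec_le 3 by (metis length_replicate)
      then show ?thesis using RT by simp
    qed
  qed
  have Rv: "?b < rrot i ?b" if i: "i \<le> length ?b" for i
  proof -
    obtain R T where RT: "\<forall>x. rrot i (?P @ x # Q) = R @ x # T"
      using rrot_track[of i ?P Q] i by auto
    have lRT: "length (R @ e # T) = length ?b" using RT rrot_length by metis
    show ?thesis
    proof (cases "length R < z")
      case True then show ?thesis using zl lRT RT by simp
    next
      case False
      have "?a < rrot i ?a" using inA_rrot[OF A] i by simp
      then have "?a < R @ Suc e # T" using RT by simp
      then have "?b < R @ e # T" using dec_less False by (metis length_replicate not_less)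
      then show ?thesis using RT by simp
    qed
  qed
  show ?thesis unfolding inA_idx using sb N Rv by blast
qed




lemma rot_zero:
  fixes v :: "nat list"
  assumes p: "p \<ge> 1" and v: "v \<noteq> []" "hd v \<noteq> 0" "last v \<noteq> 0"
    and ni: "\<not> (\<exists>a b. v = a @ replicate p 0 @ b)"
    and r: "\<rho> \<in> rotations (replicate p 0 @ v)"
  shows "\<rho> = replicate p 0 @ v \<or> take p \<rho> \<noteq> replicate p 0"
proof -
  obtain u w where uw: "replicate p 0 @ v = u @ w" "\<rho> = w @ u" using r by (rule rotE)
  show ?thesis
  proof (cases "u = [] \<or> w = []")
    case True then show ?thesis using uw by auto
  next
    case False
    then have u: "u \<noteq> []" and w: "w \<noteq> []" by auto
    obtain us where "(u = replicate p 0 @ us \<and> us @ w = v) \<or> (u @ us = replicate p 0 \<and> w = us @ v)"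
      using uw(1) unfolding append_eq_append_conv2 by metis
    then show ?thesis
    proof
      assume a: "u @ us = replicate p 0 \<and> w = us @ v"
      have lus: "length us < p" using a u by (metis length_append length_greater_0_conv length_replicate less_add_same_cancel2)
      have "\<rho> ! length us = hd v" using a uw(2) v(1) by (simp add: nth_append hd_conv_nth)
      then have "take p \<rho> \<noteq> replicate p 0" using take_ne_zeros[of "length us" p \<rho>] lus v(2) a uw(2) v(1)
        by simp
      then show ?thesis by simp
    next
      assume a: "u = replicate p 0 @ us \<and> us @ w = v"
      show ?thesis
      proof (cases "length w \<ge> p")
        case True
        have "take p \<rho> = take p w" using uw(2) True by simp
        moreover have "take p w \<noteq> replicate p 0"
        proof
          assume "take p w = replicate p 0"
          then have "w = replicate p 0 @ drop p w" by (metis append_take_drop_id)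
          then have "v = us @ replicate p 0 @ drop p w" using a by metis
          then show False using ni by blast
        qed
        ultimately show ?thesis by simp
      next
        case False
        have "\<rho> ! (length w - 1) = last w" using uw(2) w by (simp add: nth_append last_conv_nth)
        moreover have "last w = last v" using a w by (metis last_appendR)
        ultimately have nz: "\<rho> ! (length w - 1) \<noteq> 0" using v(3) by simp
        have j: "length w - 1 < p" "length w - 1 < length \<rho>" using False w uw(2) by (cases w; auto)+
        show ?thesis using take_ne_zeros[OF j nz] by blast
      qed
    qed
  qed
qed

lemma ULR:
  fixes v :: "nat list"
  assumes p: "p \<ge> 1" and v: "v \<noteq> []" "hd v \<noteq> 0" "last v \<noteq> 0"
    and ni: "\<not> (\<exists>a b. v = a @ replicate p 0 @ b)"
    and lt: "v < rev v"
    and s: "replicate p 0 @ v \<in> strings k n"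
  shows "replicate p 0 @ v \<in> asym_bracelets k n"
proof -
  let ?g = "replicate p (0::nat) @ v"
  have N: "?g \<le> rotn i ?g" if "i \<le> length ?g" for i
  proof -
    have "rotn i ?g \<in> rotations ?g" unfolding rotn_def by (rule rotI) (metis append_take_drop_id)
    then have "rotn i ?g = ?g \<or> take p (rotn i ?g) \<noteq> replicate p 0"
      using rot_zero[OF p v ni] by blast
    then show ?thesis
    proof
      assume "take p (rotn i ?g) \<noteq> replicate p 0"
      then have "?g < rotn i ?g" using zeros_less[of "rotn i ?g" p v] by simp
      then show ?thesis by simp
    qed simp
  qed
  have vr: "rev v \<noteq> []" "hd (rev v) \<noteq> 0" "last (rev v) \<noteq> 0"
    using v by (simp_all add: hd_rev last_rev)
  have nir: "\<not> (\<exists>a b. rev v = a @ replicate p 0 @ b)"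
  proof
    assume "\<exists>a b. rev v = a @ replicate p 0 @ b"
    then obtain a b where "rev v = a @ replicate p 0 @ b" by blast
    then have "v = rev b @ replicate p 0 @ rev a" by (metis append.assoc rev_append rev_replicate rev_rev_ident)
    then show False using ni by blast
  qed
  have Rv: "?g < rrot i ?g" if "i \<le> length ?g" for i
  proof -
    have "rev ?g = rev (drop i ?g) @ rev (take i ?g)" by (metis append_take_drop_id rev_append)
    then have r1: "rrot i ?g \<in> rotations (rev ?g)" unfolding rrot_def by (rule rotI)
    have "rev ?g = rev v @ replicate p 0" by simp
    then have "rev ?g \<in> rotations (replicate p 0 @ rev v)" by (simp add: rotI)
    then have "rotations (rev ?g) = rotations (replicate p 0 @ rev v)" by (rule rot_eq)
    then have "rrot i ?g \<in> rotations (replicate p 0 @ rev v)" using r1 by simp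
    then have "rrot i ?g = replicate p 0 @ rev v \<or> take p (rrot i ?g) \<noteq> replicate p 0"
      using rot_zero[OF p vr nir] by blast
    then show ?thesis
    proof
      assume "rrot i ?g = replicate p 0 @ rev v"
      then show ?thesis using lt app_less_same by simp
    next
      assume "take p (rrot i ?g) \<noteq> replicate p 0"
      then show ?thesis using zeros_less[of "rrot i ?g" p v] by simp
    qed
  qed
  show ?thesis unfolding inA_idx using s N Rv by blast
qed

lemma root_A:
  assumes "n \<ge> 3" "k \<ge> 3"
  shows "root_string n k \<in> asym_bracelets k n"
proof -
  have "replicate (n - 2) 0 @ [k - 2, k - 1] \<in> asym_bracelets k n"
  proof (rule ULR)
    show "\<not> (\<exists>a b. [k - 2, k - 1] = a @ replicate (n - 2) 0 @ b)"
    proof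
      assume "\<exists>a b. [k - 2, k - 1] = a @ replicate (n - 2) 0 @ b"
      then obtain a b where e: "[k - 2, k - 1] = a @ replicate (n - 2) 0 @ b" by blast
      have "0 \<in> set [k - 2, k - 1]" unfolding e using assms by simp
      then show False using assms by auto
    qed
    have "k - 2 < k - 1" using assms by arith
    then show "[k - 2, k - 1] < rev [k - 2, k - 1]" by simp
    show "replicate (n - 2) 0 @ [k - 2, k - 1] \<in> strings k n" unfolding strings_iff using assms by auto
  qed (use assms in auto)
  then show ?thesis by (simp add: root_string_def)
qed

lemma LNM_a:
  assumes A: "x @ [b] \<in> asym_bracelets k n" and bk: "Suc b < k"
  shows "x @ [Suc b] \<in> asym_bracelets k n"
proof -
  have "x @ Suc b # [] \<in> asym_bracelets k n"
  proof (rule inc_A)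
    show "x @ b # [] \<in> asym_bracelets k n" using A by simp
    show "Suc b < k" by fact
  next
    fix i assume "length x < i" "i < length x + length ([]::nat list) + 1"
    then show "x @ Suc b # [] \<le> rotn i (x @ Suc b # [])" by simp
  next
    fix i assume i: "i \<le> length x + length ([]::nat list) + 1"
      and g: "(if i \<le> length x then i + length ([]::nat list) else i - length x - 1) > length x"
    have False using i g by (cases "i \<le> length x") auto
    then show "x @ Suc b # [] < rrot i (x @ Suc b # [])" ..
  qed
  then show ?thesis by simp
qed

lemma hd_le_rot:
  assumes A: "xs \<in> asym_bracelets k n" and "xs = y @ z" "y \<noteq> []" "z \<noteq> []"
  shows "hd y \<le> hd z"
proof -
  have "xs \<le> rotn (length y) xs" using inA_rotn[OF A] assms by simp
  then have "y @ z \<le> z @ y" using assms by (simp add: rotn_def)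
  then show ?thesis using assms by (cases y; cases z) auto
qed

lemma LNM_f:
  assumes A: "y @ [b, k - 1] \<in> asym_bracelets k n" and bk: "Suc b < k" and y: "y \<noteq> []"
    and c: "y < rev y \<or> Suc b < k - 1"
  shows "y @ [Suc b, k - 1] \<in> asym_bracelets k n"
proof -
  have hy: "hd y \<le> b" using hd_le_rot[OF A, of y "[b, k-1]"] y by simp
  have "y @ Suc b # [k - 1] \<in> asym_bracelets k n"
  proof (rule inc_A)
    show "y @ b # [k - 1] \<in> asym_bracelets k n" using A by simp
    show "Suc b < k" by fact
  next
    fix i assume "length y < i" "i < length y + length [k - 1] + 1"
    then have i: "i = length y + 1" by simp
    have "rotn i (y @ Suc b # [k - 1]) = (k - 1) # y @ [Suc b]" using i by (simp add: rotn_def)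
    moreover have "y @ Suc b # [k - 1] < (k - 1) # y @ [Suc b]" using hy y bk by (cases y) auto
    ultimately show "y @ Suc b # [k - 1] \<le> rotn i (y @ Suc b # [k - 1])" by simp
  next
    fix i assume i: "i \<le> length y + length [k - 1] + 1"
      and g: "(if i \<le> length y then i + length [k - 1] else i - length y - 1) > length y"
    have "i = length y"
    proof (cases "i \<le> length y")
      case True then show ?thesis using g by simp
    next
      case False then have "i - length y - 1 > length y" using g by simp
      then show ?thesis using i y by (cases y) auto
    qed
    then have r: "rrot i (y @ Suc b # [k - 1]) = rev y @ [k - 1, Suc b]"
       and ra: "rrot i (y @ [b, k - 1]) = rev y @ [k - 1, b]" by (simp_all add: rrot_def)
    have "y @ [b, k - 1] < rev y @ [k - 1, b]" using inA_rrot[OF A, of i] ra \<open>i = length y\<close> by simp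
    then have "y \<le> rev y" using app_less_prefix by simp
    show "y @ Suc b # [k - 1] < rrot i (y @ Suc b # [k - 1])"
    proof (cases "y < rev y")
      case True then show ?thesis using r app_lessI[of y "rev y"] by simp
    next
      case False
      then have "y = rev y" "Suc b < k - 1" using \<open>y \<le> rev y\<close> c by (auto simp: order_le_less)
      then show ?thesis using r app_less_same[of y] by (metis Cons_less_Cons append_Cons append_Nil)
    qed
  qed
  then show ?thesis by simp
qed




lemma SLNM_g:
  assumes A: "y1 @ [d, 0, 1, 2] \<in> asym_bracelets 3 n" and d: "d < 2" and y: "y1 \<noteq> []" "hd y1 = 0"
  shows "y1 @ [d, 1, 1, 2] \<in> asym_bracelets 3 n"
proof -
  let ?P = "y1 @ [d]"
  have "?P @ Suc 0 # [1, 2] \<in> asym_bracelets 3 n"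
  proof (rule inc_A)
    show "?P @ 0 # [1, 2] \<in> asym_bracelets 3 n" using A by simp
    show "Suc 0 < 3" by simp
  next
    fix i assume "length ?P < i" "i < length ?P + length [1, 2::nat] + 1"
    then have "i = length ?P + 1 \<or> i = length ?P + 2" by auto
    then show "?P @ Suc 0 # [1, 2] \<le> rotn i (?P @ Suc 0 # [1, 2])"
    proof
      assume "i = length ?P + 1"
      then have "rotn i (?P @ Suc 0 # [1, 2]) = 1 # 2 # ?P @ [1]" by (simp add: rotn_def)
      then show ?thesis using y by (cases y1) auto
    next
      assume "i = length ?P + 2"
      then have "rotn i (?P @ Suc 0 # [1, 2]) = 2 # ?P @ [1, 1]" by (simp add: rotn_def)
      then show ?thesis using y by (cases y1) auto
    qed
  next
    fix i assume i: "i \<le> length ?P + length [1, 2::nat] + 1"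
      and g: "(if i \<le> length ?P then i + length [1, 2::nat] else i - length ?P - 1) > length ?P"
    have ly: "length y1 \<ge> 1" using y by (cases y1) auto
    have "i = length y1 \<or> i = length y1 + 1"
    proof (cases "i \<le> length ?P")
      case True then show ?thesis using g by auto
    next
      case False then show ?thesis using g i ly by auto
    qed
    then show "?P @ Suc 0 # [1, 2] < rrot i (?P @ Suc 0 # [1, 2])"
    proof
      assume ii: "i = length y1"
      have r: "rrot i (?P @ Suc 0 # [1, 2]) = rev y1 @ [2, 1, 1, d]"
        and ra: "rrot i (?P @ 0 # [1, 2]) = rev y1 @ [2, 1, 0, d]" using ii by (simp_all add: rrot_def)
      have "y1 @ [d, 0, 1, 2] < rev y1 @ [2, 1, 0, d]"
        using inA_rrot[OF A, of i] ra ii by simp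
      then have le: "y1 \<le> rev y1" using app_less_prefix by simp
      show ?thesis
      proof (cases "y1 < rev y1")
        case True then show ?thesis using r app_lessI[of y1 "rev y1"] by simp
      next
        case False then have "y1 = rev y1" using le by simp
        then show ?thesis using r d app_less_same[of y1 "[d, 1, 1, 2]" "[2, 1, 1, d]"] by simp
      qed
    next
      assume ii: "i = length y1 + 1"
      have r: "rrot i (?P @ Suc 0 # [1, 2]) = rev ?P @ [2, 1, 1]"
        and ra: "rrot i (?P @ 0 # [1, 2]) = rev ?P @ [2, 1, 0]" using ii by (simp_all add: rrot_def)
      have "?P @ [0, 1, 2] < rev ?P @ [2, 1, 0]"
        using inA_rrot[OF A, of i] ra ii by simp
      then have le: "?P \<le> rev ?P" using app_less_prefix by (metis length_rev)
      show ?thesis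
      proof (cases "?P < rev ?P")
        case True then show ?thesis using r app_lessI[of ?P "rev ?P"] by simp
      next
        case False then have "?P = rev ?P" using le by simp
        then show ?thesis using r app_less_same[of ?P "[1, 1, 2]" "[2, 1, 1]"] by simp
      qed
    qed
  qed
  then show ?thesis by simp
qed

lemma FNM_d:
  assumes A: "replicate z 0 @ h # Q \<in> asym_bracelets k n" and h: "h \<ge> 2"
  shows "replicate z 0 @ (h - 1) # Q \<in> asym_bracelets k n"
proof -
  obtain e where e: "h = Suc e" "e \<noteq> 0" using h by (cases h) auto
  show ?thesis using dec_A[of z e Q k n] A e by simp
qed

lemma LS_A:
  assumes A: "\<alpha> \<in> asym_bracelets k n" and k: "k \<ge> 2"
    and a: "\<alpha> = replicate z 0 @ v @ replicate t 0 @ [k - 1]"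
    and v: "v \<noteq> []" "hd v \<noteq> 0" "last v \<noteq> 0" and lt: "v < rev v"
  shows "last_symbol k \<alpha> = replicate (Suc (z + t)) 0 @ v \<and>
         replicate (Suc (z + t)) 0 @ v \<in> asym_bracelets k n"
proof -
  let ?g = "replicate (Suc (z + t)) (0::nat) @ v"
  have ni1: "\<not> (\<exists>a b. v = a @ replicate (Suc z) 0 @ b)"
  proof
    assume "\<exists>a b. v = a @ replicate (Suc z) 0 @ b"
    then obtain a b where vab: "v = a @ replicate (Suc z) 0 @ b" by blast
    let ?i = "z + length a"
    have "rotn ?i \<alpha> = replicate (Suc z) 0 @ (b @ replicate t 0 @ [k - 1] @ replicate z 0 @ a)"
      using a vab by (simp add: rotn_def)
    moreover have "take (Suc z) \<alpha> \<noteq> replicate (Suc z) 0"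
      using take_ne_zeros[of z "Suc z" \<alpha>] a v by (simp add: nth_append hd_conv_nth)
    moreover have "length \<alpha> = Suc z + length (b @ replicate t 0 @ [k - 1] @ replicate z 0 @ a)"
      using a vab by simp
    ultimately have "rotn ?i \<alpha> < \<alpha>"
      using zeros_less[of \<alpha> "Suc z"] by metis
    moreover have "\<alpha> \<le> rotn ?i \<alpha>" using inA_rotn[OF A, of ?i] a vab by simp
    ultimately show False by simp
  qed
  have ni: "\<not> (\<exists>a b. v = a @ replicate (Suc (z + t)) 0 @ b)"
  proof
    assume "\<exists>a b. v = a @ replicate (Suc (z + t)) 0 @ b"
    then obtain a b where "v = a @ replicate (Suc (z + t)) 0 @ b" by blast
    then have "v = a @ replicate (Suc z) 0 @ (replicate t 0 @ b)"
      by (simp add: replicate_add[symmetric])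
    then show False using ni1 by blast
  qed
  have sA: "\<alpha> \<in> strings k n" using A inA_strings by blast
  have sg: "?g \<in> strings k n" using sA a k unfolding strings_iff by auto
  have gA: "?g \<in> asym_bracelets k n" using ULR[OF _ v ni lt sg] by simp
  have a': "\<alpha> = (replicate z 0 @ v @ replicate t 0) @ [k - 1]" using a by simp
  have "butlast \<alpha> = replicate z 0 @ v @ replicate t 0" "last \<alpha> = k - 1"
    by (subst a', simp only: butlast_snoc last_snoc)+
  then have d: "butlast \<alpha> @ [(last \<alpha> + 1) mod k] = (replicate z 0 @ v) @ replicate (Suc t) 0"
    using k by (simp add: replicate_append_same)
  have "?g = replicate (Suc t) 0 @ replicate z 0 @ v" by (simp add: replicate_add[symmetric])
  moreover have "replicate (Suc t) 0 @ (replicate z 0 @ v) \<in> rotations ((replicate z 0 @ v) @ replicate (Suc t) 0)"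
    by (rule rotI) simp
  ultimately have "?g \<in> rotations (butlast \<alpha> @ [(last \<alpha> + 1) mod k])" using d by simp
  then have R: "rotations (butlast \<alpha> @ [(last \<alpha> + 1) mod k]) = rotations ?g" using rot_eq by metis
  have "Min (rotations ?g) = ?g"
  proof (rule Min_eqI)
    show "finite (rotations ?g)" by (rule finite_rotations)
    show "?g \<in> rotations ?g" by (rule rot_self)
    fix y assume "y \<in> rotations ?g"
    then obtain u w where "?g = u @ w" "y = w @ u" by (rule rotE)
    then show "?g \<le> y" using gA unfolding inA_iff by blast
  qed
  then have "last_symbol k \<alpha> = ?g" unfolding last_symbol_def necklace_of_def R .
  then show ?thesis using gA by simp
qed




lemma in_set_opt_simps[simp]: "in_set_opt A (Some x) \<longleftrightarrow> x \<in> A" "\<not> in_set_opt A None"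
  by (simp_all add: in_set_opt_def)

lemma finite_nonmax: "finite (nonmax_idx k xs)"
  unfolding nonmax_idx_def by simp

lemma nth_rep_tail:
  assumes "length x < j" "j < length x + 1 + m"
  shows "(x @ b # replicate m c) ! j = c"
proof -
  define i where "i = j - length x - 1"
  have j: "j = length x + Suc i" using assms(1) i_def by arith
  then have "i < m" using assms(2) by simp
  then show ?thesis using j by (simp add: nth_append)
qed

lemma lnm_eq:
  assumes b: "b \<noteq> k - 1"
  shows "last_non_max k (x @ b # replicate m (k - 1)) = Some (x @ Suc b # replicate m (k - 1))"
proof -
  let ?a = "x @ b # replicate m (k - 1)"
  have mem: "length x \<in> nonmax_idx k ?a" using b unfolding nonmax_idx_def by simp
  have bd: "j \<le> length x" if "j \<in> nonmax_idx k ?a" for j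
  proof (rule ccontr)
    assume "\<not> j \<le> length x"
    then have "?a ! j = k - 1" using that unfolding nonmax_idx_def
      using nth_rep_tail[of x j m b "k - 1"] by simp
    then show False using that unfolding nonmax_idx_def by simp
  qed
  have M: "Max (nonmax_idx k ?a) = length x"
    by (rule Max_eqI[OF finite_nonmax bd mem])
  have ne: "nonmax_idx k ?a \<noteq> {}" using mem by blast
  have "last_non_max k ?a = Some (take (length x) ?a @ [?a ! length x + 1] @
          replicate (length ?a - length x - 1) (k - 1))"
    unfolding last_non_max_def if_not_P[OF ne] Let_def M ..
  then show ?thesis by simp
qed

lemma fnm_eq:
  assumes h: "h \<noteq> 0"
  shows "first_non_min (replicate z 0 @ h # s) = Some (replicate z 0 @ (h - 1) # s)"
proof -
  let ?a = "replicate z 0 @ h # s"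
  let ?S = "{i. i < length ?a \<and> ?a ! i \<noteq> 0}"
  have mem: "z \<in> ?S" using h by (simp add: nth_append)
  have bd: "z \<le> i" if "i \<in> ?S" for i
  proof (rule ccontr)
    assume "\<not> z \<le> i"
    then have "?a ! i = 0" by (simp add: nth_append)
    then show False using that by simp
  qed
  have M: "Min ?S = z" by (rule Min_eqI) (use mem bd in auto)
  have ne: "?S \<noteq> {}" using mem by blast
  have "first_non_min ?a = Some (replicate (Min ?S) 0 @ [?a ! Min ?S - 1] @ drop (Suc (Min ?S)) ?a)"
    unfolding first_non_min_def if_not_P[OF ne] Let_def ..
  then show ?thesis unfolding M by (simp add: nth_append)
qed

lemma slnm_eq:
  assumes d: "d \<noteq> k - 1" and b: "b \<noteq> k - 1"
  shows "second_last_non_max k (x @ d # b # replicate m (k - 1)) = Some (x @ Suc d # b # replicate m (k - 1))"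
proof -
  let ?a = "x @ d # b # replicate m (k - 1)"
  let ?N = "nonmax_idx k ?a"
  have m1: "length x \<in> ?N" using d unfolding nonmax_idx_def by simp
  have m2: "Suc (length x) \<in> ?N" using b unfolding nonmax_idx_def by (simp add: nth_append)
  have bd: "j \<le> Suc (length x)" if "j \<in> ?N" for j
  proof (rule ccontr)
    assume "\<not> j \<le> Suc (length x)"
    then have "?a ! j = k - 1" using that unfolding nonmax_idx_def
      using nth_rep_tail[of "x @ [d]" j m b "k - 1"] by simp
    then show False using that unfolding nonmax_idx_def by simp
  qed
  have M: "Max ?N = Suc (length x)" by (rule Max_eqI[OF finite_nonmax bd m2])
  have c: "\<not> card ?N < 2"
  proof -
    have "{length x, Suc (length x)} \<subseteq> ?N" using m1 m2 by blast
    then have "card {length x, Suc (length x)} \<le> card ?N" using finite_nonmax by (rule card_mono[rotated])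
    then show ?thesis by simp
  qed
  have M2: "Max (?N - {Max ?N}) = length x"
  proof (rule Max_eqI)
    show "finite (?N - {Max ?N})" using finite_nonmax by simp
    show "length x \<in> ?N - {Max ?N}" using m1 M by simp
    fix j assume "j \<in> ?N - {Max ?N}"
    then show "j \<le> length x" using bd M by fastforce
  qed
  have "second_last_non_max k ?a = Some (?a[Max (?N - {Max ?N}) := ?a ! Max (?N - {Max ?N}) + 1])"
    unfolding second_last_non_max_def if_not_P[OF c] Let_def ..
  then show ?thesis unfolding M2 by (simp add: list_update_append)
qed

lemma lnm_form:
  assumes "last_non_max k \<alpha> = Some \<beta>"
  shows "\<exists>p < length \<alpha>. \<beta> = \<alpha>[p := Suc (\<alpha> ! p)] \<and> \<alpha> ! p \<noteq> k - 1 \<and>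
           (\<forall>i. p < i \<and> i < length \<alpha> \<longrightarrow> \<alpha> ! i = k - 1)"
proof -
  let ?N = "nonmax_idx k \<alpha>"
  have ne: "?N \<noteq> {}"
  proof
    assume "?N = {}"
    then have "last_non_max k \<alpha> = None" unfolding last_non_max_def by simp
    then show False using assms by simp
  qed
  define j where "j = Max ?N"
  have jN: "j \<in> ?N" using Max_in[OF finite_nonmax ne] j_def by simp
  then have jl: "j < length \<alpha>" unfolding nonmax_idx_def by simp
  have after: "\<alpha> ! i = k - 1" if "j < i" "i < length \<alpha>" for i
  proof (rule ccontr)
    assume "\<alpha> ! i \<noteq> k - 1"
    then have "i \<in> ?N" using that unfolding nonmax_idx_def by simp
    then have "i \<le> j" using Max_ge[OF finite_nonmax] j_def by simp
    then show False using that by simp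
  qed
  have "last_non_max k \<alpha> = Some (take j \<alpha> @ [\<alpha> ! j + 1] @ replicate (length \<alpha> - j - 1) (k - 1))"
    unfolding last_non_max_def if_not_P[OF ne] Let_def j_def ..
  then have b: "\<beta> = take j \<alpha> @ [\<alpha> ! j + 1] @ replicate (length \<alpha> - j - 1) (k - 1)"
    using assms by simp
  have "drop (Suc j) \<alpha> = replicate (length \<alpha> - j - 1) (k - 1)"
  proof (rule nth_equalityI)
    show "length (drop (Suc j) \<alpha>) = length (replicate (length \<alpha> - j - 1) (k - 1))" by simp
    fix i assume "i < length (drop (Suc j) \<alpha>)"
    then show "drop (Suc j) \<alpha> ! i = replicate (length \<alpha> - j - 1) (k - 1) ! i"
      using after[of "Suc j + i"] by simp
  qed
  then have "\<beta> = \<alpha>[j := Suc (\<alpha> ! j)]" using b jl by (simp add: upd_conv_take_nth_drop)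
  moreover have "\<alpha> ! j \<noteq> k - 1" using jN unfolding nonmax_idx_def by simp
  ultimately show ?thesis using jl after by blast
qed

lemma fnm_form:
  assumes "first_non_min \<alpha> = Some \<beta>"
  shows "\<exists>p < length \<alpha>. \<alpha> ! p \<noteq> 0 \<and> \<beta> = \<alpha>[p := \<alpha> ! p - 1]"
proof -
  let ?S = "{i. i < length \<alpha> \<and> \<alpha> ! i \<noteq> 0}"
  have ne: "?S \<noteq> {}"
  proof
    assume "?S = {}"
    then have "first_non_min \<alpha> = None" unfolding first_non_min_def by simp
    then show False using assms by simp
  qed
  have fin: "finite ?S" by simp
  define i where "i = Min ?S"
  have iS: "i \<in> ?S" using Min_in[OF fin ne] i_def by simp
  have before: "\<alpha> ! j = 0" if "j < i" for j
  proof (rule ccontr)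
    assume "\<alpha> ! j \<noteq> 0"
    then have "j \<in> ?S" using that iS by simp
    then have "i \<le> j" using Min_le[OF fin] i_def by simp
    then show False using that by simp
  qed
  have "first_non_min \<alpha> = Some (replicate i 0 @ [\<alpha> ! i - 1] @ drop (Suc i) \<alpha>)"
    unfolding first_non_min_def if_not_P[OF ne] Let_def i_def ..
  then have b: "\<beta> = replicate i 0 @ [\<alpha> ! i - 1] @ drop (Suc i) \<alpha>" using assms by simp
  have "take i \<alpha> = replicate i 0"
  proof (rule nth_equalityI)
    show "length (take i \<alpha>) = length (replicate i (0::nat))" using iS by simp
    fix j assume "j < length (take i \<alpha>)"
    then show "take i \<alpha> ! j = replicate i 0 ! j" using before[of j] by simp
  qed
  then have "\<beta> = \<alpha>[i := \<alpha> ! i - 1]" using b iS by (simp add: upd_conv_take_nth_drop)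
  then show ?thesis using iS by blast
qed

lemma slnm_form:
  assumes "second_last_non_max k \<alpha> = Some \<beta>"
  shows "\<exists>p < length \<alpha>. \<beta> = \<alpha>[p := Suc (\<alpha> ! p)]"
proof -
  let ?N = "nonmax_idx k \<alpha>"
  have c: "\<not> card ?N < 2"
  proof
    assume "card ?N < 2"
    then have "second_last_non_max k \<alpha> = None" unfolding second_last_non_max_def by simp
    then show False using assms by simp
  qed
  have ne: "?N - {Max ?N} \<noteq> {}"
  proof
    assume "?N - {Max ?N} = {}"
    then have "?N \<subseteq> {Max ?N}" by blast
    then have "card ?N \<le> card {Max ?N}" by (rule card_mono[rotated]) simp
    then have "card ?N \<le> 1" by simp
    then show False using c by simp
  qed
  define l where "l = Max (?N - {Max ?N})"
  have "l \<in> ?N - {Max ?N}" using Max_in[OF _ ne] finite_nonmax l_def by simp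
  then have ll: "l < length \<alpha>" unfolding nonmax_idx_def by simp
  have "second_last_non_max k \<alpha> = Some (\<alpha>[l := \<alpha> ! l + 1])"
    unfolding second_last_non_max_def if_not_P[OF c] Let_def l_def ..
  then have "\<beta> = \<alpha>[l := \<alpha> ! l + 1]" using assms by simp
  then show ?thesis using ll by auto
qed

lemma ls_rot:
  assumes "\<alpha> \<noteq> []"
  shows "rotations (last_symbol k \<alpha>) = rotations (\<alpha>[length \<alpha> - 1 := (last \<alpha> + 1) mod k])"
proof -
  let ?d = "butlast \<alpha> @ [(last \<alpha> + 1) mod k]"
  have d: "?d = \<alpha>[length \<alpha> - 1 := (last \<alpha> + 1) mod k]"
    using assms by (cases \<alpha> rule: rev_cases) (auto simp: list_update_append)
  have "Min (rotations ?d) \<in> rotations ?d"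
    using Min_in[OF finite_rotations] rot_self by blast
  then have "rotations (Min (rotations ?d)) = rotations ?d" by (rule rot_eq)
  then show ?thesis unfolding last_symbol_def necklace_of_def d .
qed

lemma rot_one:
  assumes p: "p < length \<alpha>" and x: "x \<noteq> \<alpha> ! p" and g: "rotations g0 = rotations (\<alpha>[p := x])"
  shows "\<exists>\<beta> \<in> rotations \<alpha>. \<exists>\<gamma> \<in> rotations g0. hd \<beta> \<noteq> hd \<gamma> \<and> tl \<beta> = tl \<gamma>"
proof -
  let ?a = "\<alpha>[p := x]"
  have b: "drop p \<alpha> @ take p \<alpha> \<in> rotations \<alpha>" by (rule rotI) simp
  have c: "drop p ?a @ take p ?a \<in> rotations g0" unfolding g by (rule rotI) (rule append_take_drop_id[symmetric])
  have d1: "drop p \<alpha> = \<alpha> ! p # drop (Suc p) \<alpha>" using p by (simp add: Cons_nth_drop_Suc)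
  have pl: "p < length ?a" using p by simp
  have e0: "drop p ?a = ?a ! p # drop (Suc p) ?a" using Cons_nth_drop_Suc[OF pl] by simp
  have e1: "?a ! p = x" using p by simp
  have e2: "drop (Suc p) ?a = drop (Suc p) \<alpha>" by simp
  have d2: "drop p ?a = x # drop (Suc p) \<alpha>" using e0 unfolding e1 e2 .
  have t: "take p ?a = take p \<alpha>" by simp
  have "hd (drop p \<alpha> @ take p \<alpha>) \<noteq> hd (drop p ?a @ take p ?a)" using d1 d2 x by simp
  moreover have "tl (drop p \<alpha> @ take p \<alpha>) = tl (drop p ?a @ take p ?a)" using d1 d2 t by simp
  ultimately show ?thesis using b c by blast
qed

lemma par_1:
  assumes "last_non_max k \<alpha> = Some b" "b \<in> asym_bracelets k n"
  shows "par k n \<alpha> = b"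
  unfolding par_def par_candidates_def using assms by simp

lemma par_2:
  assumes "\<not> in_set_opt (asym_bracelets k n) (last_non_max k \<alpha>)" "last_symbol k \<alpha> \<in> asym_bracelets k n"
  shows "par k n \<alpha> = last_symbol k \<alpha>"
  unfolding par_def par_candidates_def using assms by simp

lemma par_3:
  assumes "\<not> in_set_opt (asym_bracelets k n) (last_non_max k \<alpha>)" "last_symbol k \<alpha> \<notin> asym_bracelets k n"
    "first_non_min \<alpha> = Some b" "b \<in> asym_bracelets k n"
  shows "par k n \<alpha> = b"
  unfolding par_def par_candidates_def using assms by simp

lemma par_4:
  assumes "\<not> in_set_opt (asym_bracelets k n) (last_non_max k \<alpha>)" "last_symbol k \<alpha> \<notin> asym_bracelets k n"
    "\<not> in_set_opt (asym_bracelets k n) (first_non_min \<alpha>)"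
    "second_last_non_max k \<alpha> = Some b" "b \<in> asym_bracelets k n"
  shows "par k n \<alpha> = b"
  unfolding par_def par_candidates_def using assms by simp




definition lz :: "nat list \<Rightarrow> nat" where
  "lz xs = length (takeWhile (\<lambda>x. x = 0) xs)"

definition special :: "nat \<Rightarrow> nat list \<Rightarrow> bool" where
  "special k xs \<longleftrightarrow> (\<forall>i. lz xs < i \<and> i < length xs \<longrightarrow> xs ! i = k - 1)"

definition Mw :: "nat \<Rightarrow> nat list \<Rightarrow> int" where
  "Mw k xs = (if special k xs then int k + int (xs ! lz xs) else - int (xs ! lz xs))"

definition Mless :: "nat \<Rightarrow> nat list \<Rightarrow> nat list \<Rightarrow> bool" where
  "Mless k a b \<longleftrightarrow> lz a < lz b \<or> (lz a = lz b \<and> (Mw k a < Mw k b \<or> (Mw k a = Mw k b \<and> a < b)))"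

lemma Mless_trans: "Mless k a b \<Longrightarrow> Mless k b c \<Longrightarrow> Mless k a c"
  unfolding Mless_def by (auto intro: less_trans)

lemma Mless_irrefl: "\<not> Mless k a a"
  unfolding Mless_def by simp

lemma Mless_lz: "lz a < lz b \<Longrightarrow> Mless k a b"
  unfolding Mless_def by simp

lemma lz_app: "lz (replicate m 0 @ ys) = m + lz ys"
  by (induct m) (auto simp: lz_def)

lemma lz_Cons: "x \<noteq> 0 \<Longrightarrow> lz (x # s) = 0"
  by (simp add: lz_def)

lemma lz_rep: "h \<noteq> 0 \<Longrightarrow> lz (replicate z 0 @ h # s) = z"
  by (simp add: lz_app lz_Cons)

lemma nth_rep_h: "(replicate z 0 @ h # s) ! z = h"
  by (simp add: nth_append)

lemma lz_ge:
  assumes "take m xs = replicate m 0" "m \<le> length xs"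
  shows "m \<le> lz xs"
proof -
  have "xs = replicate m 0 @ drop m xs" using assms by (metis append_take_drop_id)
  then have "lz xs = m + lz (drop m xs)" by (metis lz_app)
  then show ?thesis by simp
qed

lemma special_rep:
  assumes h: "h \<noteq> 0"
  shows "special k (replicate z 0 @ h # s) \<longleftrightarrow> (\<forall>x\<in>set s. x = k - 1)"
proof
  assume sp: "special k (replicate z 0 @ h # s)"
  show "\<forall>x\<in>set s. x = k - 1"
  proof
    fix x assume "x \<in> set s"
    then obtain j where j: "j < length s" "s ! j = x" by (auto simp: in_set_conv_nth)
    have "(replicate z 0 @ h # s) ! (z + Suc j) = k - 1"
      using sp j(1) unfolding special_def lz_rep[OF h] by simp
    then show "x = k - 1" using j by (simp add: nth_append)
  qed
next
  assume a: "\<forall>x\<in>set s. x = k - 1"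
  show "special k (replicate z 0 @ h # s)"
    unfolding special_def lz_rep[OF h]
  proof (intro allI impI)
    fix i assume i: "z < i \<and> i < length (replicate z 0 @ h # s)"
    define j where "j = i - z - 1"
    have ij: "i = z + Suc j" using i j_def by arith
    have "j < length s" using i ij by simp
    then have "(replicate z 0 @ h # s) ! i = s ! j" using ij by (simp add: nth_append)
    then show "(replicate z 0 @ h # s) ! i = k - 1" using a \<open>j < length s\<close> by simp
  qed
qed

lemma A_not_02:
  assumes A: "\<alpha> \<in> asym_bracelets k n"
  shows "\<alpha> \<noteq> replicate z 0 @ replicate m x"
proof
  assume a: "\<alpha> = replicate z 0 @ replicate m x"
  have "rrot z \<alpha> = \<alpha>" using a by (simp add: rrot_def)
  moreover have "\<alpha> < rrot z \<alpha>" using inA_rrot[OF A, of z] a by simp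
  ultimately show False by simp
qed

lemma decomp_aux:
  "(\<exists>x\<in>set \<alpha>. x \<noteq> (0::nat)) \<Longrightarrow> \<exists>z h s. \<alpha> = replicate z 0 @ h # s \<and> h \<noteq> 0"
proof (induction \<alpha>)
  case Nil then show ?case by simp
next
  case (Cons a \<alpha>)
  show ?case
  proof (cases "a = 0")
    case False then show ?thesis by (intro exI[of _ 0] exI[of _ a] exI[of _ \<alpha>]) simp
  next
    case True
    then have "\<exists>x\<in>set \<alpha>. x \<noteq> 0" using Cons.prems by simp
    then obtain z h s where "\<alpha> = replicate z 0 @ h # s" "h \<noteq> 0" using Cons.IH by blast
    then show ?thesis using True by (intro exI[of _ "Suc z"] exI[of _ h] exI[of _ s]) simp
  qed
qed

lemma decomp:
  assumes A: "\<alpha> \<in> asym_bracelets k n"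
  shows "\<exists>z h s. \<alpha> = replicate z 0 @ h # s \<and> h \<noteq> 0"
proof (rule decomp_aux)
  show "\<exists>x\<in>set \<alpha>. x \<noteq> 0"
  proof (rule ccontr)
    assume "\<not> (\<exists>x\<in>set \<alpha>. x \<noteq> 0)"
    then have "\<forall>x\<in>set \<alpha>. x = 0" by blast
    then have "replicate (length \<alpha>) 0 = \<alpha>" by (rule replicate_length_same)
    then have "\<alpha> = replicate (length \<alpha>) 0 @ replicate 0 0" by simp
    then show False using A_not_02[OF A] by blast
  qed
qed

lemma inc_measure:
  assumes a: "\<alpha> = replicate z 0 @ h # s" and h: "h \<noteq> 0" and p: "z < p" "p < length \<alpha>"
    and nm: "\<alpha> ! p \<noteq> k - 1"
  shows "Mless k \<alpha> (\<alpha>[p := Suc (\<alpha> ! p)])"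
proof -
  define q where "q = p - z - 1"
  have pq: "p = z + Suc q" using p q_def by arith
  have q: "q < length s" using p pq a by simp
  have ap: "\<alpha> ! p = s ! q" using a pq by (simp add: nth_append)
  define s' where "s' = s[q := Suc (s ! q)]"
  have b: "\<alpha>[p := Suc (\<alpha> ! p)] = replicate z 0 @ h # s'"
    using a pq ap by (simp add: list_update_append s'_def)
  have ns: "\<not> special k \<alpha>"
  proof
    assume "special k \<alpha>"
    then have "\<forall>x\<in>set s. x = k - 1" using special_rep[OF h] a by simp
    then show False using nm ap q by (metis nth_mem)
  qed
  have Ma: "Mw k \<alpha> = - int h" using ns a unfolding Mw_def by (simp add: lz_rep[OF h] nth_rep_h)
  have ls: "s < s'"
  proof -
    have "s = take q s @ s ! q # drop (Suc q) s" using q by (simp add: id_take_nth_drop)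
    moreover have "s' = take q s @ Suc (s ! q) # drop (Suc q) s" using q
      by (simp add: s'_def upd_conv_take_nth_drop)
    ultimately show ?thesis using app_less_same by (metis Cons_less_Cons lessI)
  qed
  have lab: "\<alpha> < \<alpha>[p := Suc (\<alpha> ! p)]" using a b ls app_less_same[of "replicate z 0 @ [h]" s s'] by simp
  have lzb: "lz (\<alpha>[p := Suc (\<alpha> ! p)]) = z" using b lz_rep[OF h] by simp
  have lza: "lz \<alpha> = z" using a lz_rep[OF h] by simp
  have Mb: "Mw k (\<alpha>[p := Suc (\<alpha> ! p)]) \<ge> - int h"
    using b unfolding Mw_def lzb by (simp add: nth_append)
  show ?thesis unfolding Mless_def lza lzb using Ma Mb lab by auto
qed

lemma lnm_M:
  assumes A: "\<alpha> \<in> asym_bracelets k n" and k: "k \<ge> 3" and L: "last_non_max k \<alpha> = Some \<beta>"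
  shows "Mless k \<alpha> \<beta>"
proof -
  obtain p where p: "p < length \<alpha>" "\<beta> = \<alpha>[p := Suc (\<alpha> ! p)]" "\<alpha> ! p \<noteq> k - 1"
    and after: "\<And>i. p < i \<Longrightarrow> i < length \<alpha> \<Longrightarrow> \<alpha> ! i = k - 1"
    using lnm_form[OF L] by blast
  obtain z h s where a: "\<alpha> = replicate z 0 @ h # s" and h: "h \<noteq> 0" using decomp[OF A] by blast
  have lza: "lz \<alpha> = z" using a lz_rep[OF h] by simp
  have ha: "\<alpha> ! z = h" using a by (simp add: nth_append)
  consider "p < z" | "p = z" | "z < p" by linarith
  then show ?thesis
  proof cases
    case 1
    have zl: "z < length \<alpha>" using a by simp
    have hk: "h = k - 1" using after[OF 1 zl] ha by simp
    have sk: "\<forall>x\<in>set s. x = k - 1"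
    proof
      fix x assume "x \<in> set s"
      then obtain j where j: "j < length s" "s ! j = x" by (auto simp: in_set_conv_nth)
      have "\<alpha> ! (z + Suc j) = k - 1" using after[of "z + Suc j"] 1 j a by simp
      then show "x = k - 1" using a j by (simp add: nth_append)
    qed
    then have "s = replicate (length s) (k - 1)" by (metis replicate_length_same)
    then have "\<alpha> = replicate z 0 @ replicate (Suc (length s)) (k - 1)" using a hk by simp
    then show ?thesis using A_not_02[OF A] by blast
  next
    case 2
    have spa: "special k \<alpha>" unfolding special_def lza using after 2 by blast
    then have sk: "\<forall>x\<in>set s. x = k - 1" using special_rep[OF h] a by simp
    have b: "\<beta> = replicate z 0 @ Suc h # s" using p(2) 2 a nth_rep_h[of z h s] by (simp add: list_update_append)
    have lzb: "lz \<beta> = z" using b lz_rep by simp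
    have spb: "special k \<beta>" using b sk special_rep[of "Suc h"] by simp
    have "Mw k \<alpha> = int k + int h" using spa unfolding Mw_def lza ha by simp
    moreover have "Mw k \<beta> = int k + int (Suc h)" using spb b unfolding Mw_def lzb by (simp add: nth_append)
    ultimately show ?thesis unfolding Mless_def lza lzb by simp
  next
    case 3
    show ?thesis using inc_measure[OF a h 3 p(1)] p by simp
  qed
qed

lemma fnm_M1:
  "Mless k (replicate z 0 @ Suc 0 # s) (replicate z 0 @ 0 # s)"
proof -
  have "lz (replicate z 0 @ 0 # s) = Suc z + lz s"
    using lz_app[of "Suc z" s] by (simp add: replicate_append_same[symmetric])
  moreover have "lz (replicate z 0 @ Suc 0 # s) = z" using lz_rep by simp
  ultimately show ?thesis by (intro Mless_lz) simp
qed

lemma fnm_M2: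
  assumes h: "h \<ge> 2" and ns: "\<not> special k (replicate z 0 @ h # s)"
  shows "Mless k (replicate z 0 @ h # s) (replicate z 0 @ (h - 1) # s)"
proof -
  have h0: "h \<noteq> 0" "h - 1 \<noteq> 0" using h by auto
  have ns2: "\<not> special k (replicate z 0 @ (h - 1) # s)" using ns special_rep[OF h0(1)] special_rep[OF h0(2)] by simp
  have "Mw k (replicate z 0 @ h # s) = - int h" using ns unfolding Mw_def lz_rep[OF h0(1)] by (simp add: nth_append)
  moreover have "Mw k (replicate z 0 @ (h - 1) # s) = - int (h - 1)" using ns2 unfolding Mw_def lz_rep[OF h0(2)]
    by (simp add: nth_append)
  ultimately show ?thesis unfolding Mless_def lz_rep[OF h0(1)] lz_rep[OF h0(2)] using h by auto
qed

lemma ls_M: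
  assumes a: "\<alpha> = replicate z 0 @ h # s" and h: "h \<noteq> 0" and l: "last \<alpha> = k - 1" and k: "k \<ge> 1"
  shows "Mless k \<alpha> (last_symbol k \<alpha>)"
proof -
  let ?d = "butlast \<alpha> @ [(last \<alpha> + 1) mod k]"
  have m: "(last \<alpha> + 1) mod k = 0" using l k by simp
  have bl: "butlast \<alpha> = replicate z 0 @ butlast (h # s)" using a by (simp add: butlast_append)
  let ?r = "replicate (Suc z) 0 @ butlast (h # s)"
  have "?r \<in> rotations ?d"
  proof -
    have "?d = butlast \<alpha> @ [0]" using m by simp
    moreover have "[0] @ butlast \<alpha> \<in> rotations (butlast \<alpha> @ [0])" by (rule rotI) simp
    moreover have "[0] @ butlast \<alpha> = ?r" using bl by simp
    ultimately show ?thesis by simp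
  qed
  then have le: "Min (rotations ?d) \<le> ?r" using Min_le[OF finite_rotations] by blast
  have mi: "Min (rotations ?d) \<in> rotations ?d" using Min_in[OF finite_rotations] rot_self by blast
  have len: "length (Min (rotations ?d)) = length ?r"
    using rot_length[OF mi] rot_length[OF \<open>?r \<in> rotations ?d\<close>] by simp
  have tk: "take (Suc z) ?r = replicate (Suc z) 0" by simp
  have sl: "Suc z \<le> length ?r" by simp
  have "take (Suc z) (Min (rotations ?d)) = replicate (Suc z) 0"
    using zeros_prefix_le[OF le len tk sl] .
  then have "Suc z \<le> lz (Min (rotations ?d))" using lz_ge len sl by simp
  moreover have "lz \<alpha> = z" using a lz_rep[OF h] by simp
  ultimately show ?thesis unfolding last_symbol_def necklace_of_def by (intro Mless_lz) simp
qed

lemma strip_zeros: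
  fixes w :: "nat list"
  shows "w \<noteq> [] \<Longrightarrow> hd w \<noteq> 0 \<Longrightarrow> \<exists>v t. w = v @ replicate t 0 \<and> v \<noteq> [] \<and> hd v = hd w \<and> last v \<noteq> 0"
proof (induction w rule: rev_induct)
  case Nil then show ?case by simp
next
  case (snoc x w)
  show ?case
  proof (cases "x = 0")
    case False
    then show ?thesis using snoc.prems by (intro exI[of _ "w @ [x]"] exI[of _ 0]) simp
  next
    case True
    then have "w \<noteq> []" using snoc.prems by auto
    then have "hd w \<noteq> 0" using snoc.prems by simp
    then obtain v t where "w = v @ replicate t 0" "v \<noteq> []" "hd v = hd w" "last v \<noteq> 0"
      using snoc.IH \<open>w \<noteq> []\<close> by blast
    then show ?thesis using True \<open>w \<noteq> []\<close>
      by (intro exI[of _ v] exI[of _ "Suc t"]) (simp add: replicate_append_same[symmetric])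
  qed
qed




lemma key:
  assumes n: "n \<ge> 3" and k: "k \<ge> 3" and A: "\<alpha> \<in> asym_bracelets k n"
    and nr: "\<alpha> \<noteq> root_string n k"
  shows "par k n \<alpha> \<in> asym_bracelets k n \<and> Mless k \<alpha> (par k n \<alpha>)"
proof -
  obtain z h s where a: "\<alpha> = replicate z 0 @ h # s" and h: "h \<noteq> 0" using decomp[OF A] by blast
  have sA: "\<alpha> \<in> strings k n" using A inA_strings by blast
  then have len: "length \<alpha> = n" and lt: "\<forall>x\<in>set \<alpha>. x < k" unfolding strings_iff by auto
  have ne: "\<alpha> \<noteq> []" using a by simp
  have lastk: "last \<alpha> < k" using lt ne by simp
  have ab: "\<alpha> = butlast \<alpha> @ [last \<alpha>]" using ne by simp
  show ?thesis
  proof (cases "last \<alpha> = k - 1")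
    case False
    then have sl: "Suc (last \<alpha>) < k" using lastk by simp
    have L: "last_non_max k \<alpha> = Some (butlast \<alpha> @ [Suc (last \<alpha>)])"
      using lnm_eq[of "last \<alpha>" k "butlast \<alpha>" 0] False ab by simp
    have B: "butlast \<alpha> @ [Suc (last \<alpha>)] \<in> asym_bracelets k n"
      using LNM_a[of "butlast \<alpha>" "last \<alpha>" k n] A ab sl by simp
    have P: "par k n \<alpha> = butlast \<alpha> @ [Suc (last \<alpha>)]" using par_1[OF L B] .
    show ?thesis using P B lnm_M[OF A _ L] k by simp
  next
    case lastc: True
    show ?thesis
    proof (cases "in_set_opt (asym_bracelets k n) (last_non_max k \<alpha>)")
      case True
      then obtain \<beta> where L: "last_non_max k \<alpha> = Some \<beta>" and B: "\<beta> \<in> asym_bracelets k n"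
        by (cases "last_non_max k \<alpha>") auto
      show ?thesis using par_1[OF L B] B lnm_M[OF A _ L] k by simp
    next
      case nL: False
      show ?thesis
      proof (cases "last_symbol k \<alpha> \<in> asym_bracelets k n")
        case True
        show ?thesis using par_2[OF nL True] True ls_M[OF a h lastc] k by simp
      next
        case nS: False
        have sne: "s \<noteq> []"
        proof
          assume "s = []"
          then have "\<alpha> = replicate z 0 @ replicate 1 (k - 1)" using a lastc by simp
          then show False using A_not_02[OF A] by blast
        qed
        have ls: "last s = k - 1" using lastc a sne by simp
        have "s = butlast s @ [k - 1]" using sne ls append_butlast_last_id by metis
        then have hs: "h # s = (h # butlast s) @ [k - 1]" by simp
        obtain v t where vt: "h # butlast s = v @ replicate t 0" and v: "v \<noteq> []" "hd v = h" "last v \<noteq> 0"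
          using strip_zeros[of "h # butlast s"] h by auto
        have a2: "\<alpha> = replicate z 0 @ v @ replicate t 0 @ [k - 1]" using a hs vt by simp
        have nlt: "\<not> v < rev v"
        proof
          assume "v < rev v"
          then have "last_symbol k \<alpha> \<in> asym_bracelets k n"
            using LS_A[OF A _ a2 v(1) _ v(3)] v(2) h k by simp
          then show False using nS by simp
        qed
        show ?thesis
        proof (cases "h \<ge> 2")
          case True
          have F: "first_non_min \<alpha> = Some (replicate z 0 @ (h - 1) # s)" using fnm_eq[OF h] a by simp
          have FA: "replicate z 0 @ (h - 1) # s \<in> asym_bracelets k n" using FNM_d[of z h s k n] A a True by simp
          have P: "par k n \<alpha> = replicate z 0 @ (h - 1) # s" using par_3[OF nL nS F FA] .
          have nsp: "\<not> special k \<alpha>"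
          proof
            assume "special k \<alpha>"
            then have sk: "\<forall>x\<in>set s. x = k - 1" using special_rep[OF h] a by simp
            then have sr: "s = replicate (length s) (k - 1)" by (metis replicate_length_same)
            have hk: "h \<noteq> k - 1"
            proof
              assume "h = k - 1"
              then have "\<alpha> = replicate z 0 @ replicate (Suc (length s)) (k - 1)" using a sr by (metis replicate_Suc)
              then show False using A_not_02[OF A] by blast
            qed
            have hk2: "h < k - 1" using hk lt a by auto
            show False
            proof (cases "length s = 1")
              case True
              then have s1: "s = [k - 1]" using sr by (metis One_nat_def replicate_0 replicate_Suc)
              have a3: "\<alpha> = replicate z 0 @ [h, k - 1]" using a s1 by simp
              have zn: "z = n - 2" using a3 len by simp
              have z1: "z \<ge> 1" using zn n by simp
              have Suc_h: "Suc h < k - 1"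
              proof (rule ccontr)
                assume "\<not> Suc h < k - 1"
                then have "h = k - 2" using hk2 by simp
                then have "\<alpha> = root_string n k" using a3 zn by (simp add: root_string_def)
                then show False using nr by simp
              qed
              have L: "last_non_max k \<alpha> = Some (replicate z 0 @ [Suc h, k - 1])"
                using lnm_eq[of h k "replicate z 0" 1] hk a3 by simp
              have "replicate z 0 @ [Suc h, k - 1] \<in> asym_bracelets k n"
                using LNM_f[of "replicate z 0" h k n] A a3 Suc_h z1 by simp
              then show False using nL L by simp
            next
              case False
              then obtain m where m: "length s = Suc (Suc m)" using sne by (cases s; cases "tl s") auto
              let ?v = "h # replicate (Suc m) (k - 1)"
              have a4: "\<alpha> = replicate z 0 @ ?v @ replicate 0 0 @ [k - 1]"
                using a sr m by (simp add: replicate_append_same)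
              have r: "rev ?v = (k - 1) # (replicate m (k - 1) @ [h])" by (simp add: replicate_append_same)
              have "?v < rev ?v" unfolding r using hk2 by (simp only: Cons_less_Cons) simp
              then have "last_symbol k \<alpha> \<in> asym_bracelets k n"
                using LS_A[OF A _ a4] h k by simp
              then show False using nS by simp
            qed
          qed
          have M: "Mless k \<alpha> (replicate z 0 @ (h - 1) # s)" using fnm_M2[OF True] nsp a by simp
          show ?thesis using P FA M by simp
        next
          case False
          then have h1: "h = 1" using h by simp
          have bl: "butlast \<alpha> = replicate z 0 @ v @ replicate t 0"
            using a2 by (simp add: butlast_append)
          have lb: "length (butlast \<alpha>) = n - 1" using len by simp
          have bne: "butlast \<alpha> \<noteq> []"
          proof
            assume "butlast \<alpha> = []"
            then have "length (butlast \<alpha>) = 0" by simp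
            then show False using lb n by simp
          qed
          define y where "y = butlast (butlast \<alpha>)"
          define b where "b = last (butlast \<alpha>)"
          have e1: "butlast \<alpha> = y @ [b]" unfolding y_def b_def using bne by simp
          have "\<alpha> = (y @ [b]) @ [k - 1]" using ab[unfolded e1 lastc] .
          then have ay: "\<alpha> = y @ [b, k - 1]" by simp
          have ly: "length y = n - 2" using lb unfolding y_def by simp
          have yne: "y \<noteq> []" using ly n by auto
          have bk: "b < k" using lt ay by simp
          have LNMy: "last_non_max k \<alpha> = Some (y @ [Suc b, k - 1])" if "b \<noteq> k - 1"
            using lnm_eq[of b k y 1] that ay by simp
          have LNMA: "y @ [Suc b, k - 1] \<in> asym_bracelets k n" if "Suc b < k" "y < rev y \<or> Suc b < k - 1"
            using LNM_f[of y b k n] A ay that yne by simp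
          show ?thesis
          proof (cases "t = 0")
            case False
            then have b0: "b = 0" using bl unfolding b_def by (cases t) simp_all
            have "last_non_max k \<alpha> = Some (y @ [Suc b, k - 1])" using LNMy b0 k by simp
            moreover have "y @ [Suc b, k - 1] \<in> asym_bracelets k n"
            proof -
              have "Suc b < k" "Suc b < k - 1" using b0 k by simp_all
              then show ?thesis using LNMA by blast
            qed
            ultimately show ?thesis using nL by simp
          next
            case t0: True
            have blv: "butlast \<alpha> = replicate z 0 @ v" using bl t0 by simp
            have bv: "b = last v" using blv v(1) unfolding b_def by simp
            have yv: "y = replicate z 0 @ butlast v" using blv v(1) unfolding y_def by (simp add: butlast_append)
            have b1: "b = 1"
            proof (rule ccontr)
              assume "b \<noteq> 1"
              then have b2: "b \<ge> 2" using bv v(3) by simp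
              obtain x xs where vx: "v = x # xs" using v(1) by (cases v) auto
              obtain r rs where vr: "rev v = r # rs" using v(1) by (cases "rev v") auto
              have "r = last v" using vr v(1) by (metis hd_rev list.sel(1))
              then have rb: "r = b" using bv by simp
              have x1: "x = 1" using vx v(2) h1 by simp
              have "x # xs < r # rs" using x1 rb b2 by simp
              then have "v < rev v" using vx vr by simp
              then show False using nlt by simp
            qed
            have bnk: "b \<noteq> k - 1" using b1 k by simp
            have "\<alpha> < rrot (length y) \<alpha>" using inA_rrot[OF A] ay by simp
            then have "y @ [b, k - 1] < rev y @ [k - 1, b]" using ay by (simp add: rrot_def)
            then have yle: "y \<le> rev y" using app_less_prefix by (metis length_rev)
            have yeq: "y = rev y" and k3: "k = 3"
            proof -
              have "\<not> (y < rev y \<or> Suc b < k - 1)"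
              proof
                assume "y < rev y \<or> Suc b < k - 1"
                then have "y @ [Suc b, k - 1] \<in> asym_bracelets k n" using LNMA b1 k by simp
                then show False using nL LNMy[OF bnk] by simp
              qed
              then show "y = rev y" "k = 3" using yle b1 k by (auto simp: order_le_less)
            qed
            have z1: "z \<noteq> 0"
            proof
              assume z0: "z = 0"
              have av: "\<alpha> = v @ [k - 1]" using a2 z0 t0 by simp
              have "\<alpha> < rrot (length v) \<alpha>" using inA_rrot[OF A] av by simp
              then have "v @ [k - 1] < rev v @ [k - 1]" using av by (simp add: rrot_def)
              then have "v < rev v" using app_less[of v "rev v"] by simp
              then show False using nlt by simp
            qed
            have v1: "v \<noteq> [1]"
            proof
              assume "v = [1]"
              then have "\<alpha> = replicate z 0 @ [1, 2]" using a2 t0 k3 by simp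
              moreover then have "z = n - 2" using len by simp
              ultimately have "\<alpha> = root_string n k" using k3 by (simp add: root_string_def)
              then show False using nr by simp
            qed
            have vv: "v = butlast v @ [last v]" using v(1) by simp
            have bvne: "butlast v \<noteq> []"
            proof
              assume bv0: "butlast v = []"
              then have "length (butlast v) = 0" by simp
              then have l0: "length v - 1 = 0" by (simp only: length_butlast)
              have "length v \<noteq> 0" using v(1) by simp
              then have "length v = 1" using l0 by arith
              then obtain x where "v = [x]" by (metis One_nat_def length_0_conv length_Suc_conv)
              then show False using v1 v(2) h1 by simp
            qed
            have hbv: "hd (butlast v) = 1"
            proof -
              have "hd v = hd (butlast v)" using vv bvne by (metis hd_append2)
              then show ?thesis using v(2) h1 by simp
            qed
            have hy: "hd y = 0" using yv z1 by (cases z) simp_all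
            have yr: "rev y = y" using yeq[symmetric] .
            have lasty: "last y = 0"
            proof -
              have "last y = hd (rev y)" by (simp add: hd_rev)
              then show ?thesis using yr hy by simp
            qed
            have ly_eq: "length y = z + length (butlast v)" using yv by simp
            have lbv: "length (butlast v) \<ge> 1" using bvne by (cases "butlast v") auto
            have ly3: "length y \<ge> 3"
            proof (rule ccontr)
              assume "\<not> length y \<ge> 3"
              then have "z = 1" "length (butlast v) = 1" using ly_eq lbv z1 by arith+
              then obtain x where bx: "butlast v = [x]" by (metis One_nat_def length_0_conv length_Suc_conv)
              then have "x = 1" using hbv by simp
              then have "y = [0, 1]" using yv bx \<open>z = 1\<close> by simp
              then show False using yr by simp
            qed
            define y1 where "y1 = butlast (butlast y)"
            define d where "d = last (butlast y)"
            have byne: "butlast y \<noteq> []"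
            proof
              assume "butlast y = []"
              then have "length (butlast y) = 0" by simp
              then show False using ly3 by simp
            qed
            have "butlast y @ [last y] = y" by (rule append_butlast_last_id[OF yne])
            then have e2: "butlast y @ [0] = y" unfolding lasty .
            have e3: "butlast (butlast y) @ [last (butlast y)] = butlast y" by (rule append_butlast_last_id[OF byne])
            have yd: "y = y1 @ [d, 0]" using e2 e3 unfolding y1_def d_def by (metis append.assoc append_Cons append_Nil)
            have ly1: "length y1 = length y - 2" using yd by simp
            have y1ne: "y1 \<noteq> []" using ly1 ly3 by auto
            have hy1: "hd y1 = 0" using yd hy y1ne by simp
            have d_eq: "d = y ! 1"
            proof -
              have "d = y ! (length y - 2)" using yd by (simp add: nth_append)
              also have "\<dots> = rev y ! (length y - 2)" using yr by simp
              also have "\<dots> = y ! 1" using ly3 by (simp add: rev_nth)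
              finally show ?thesis .
            qed
            have d2: "d < 2"
            proof (cases "z = 1")
              case True
              then have "y ! 1 = hd (butlast v)" using yv bvne by (simp add: hd_conv_nth)
              then show ?thesis using d_eq hbv by simp
            next
              case False
              then have "z \<ge> 2" using z1 by simp
              then have "y ! 1 = 0" using yv by (simp add: nth_append)
              then show ?thesis using d_eq by simp
            qed
            have a5: "\<alpha> = y1 @ [d, 0, 1, 2]" using ay yd b1 k3 by simp
            have SL: "second_last_non_max k \<alpha> = Some (y1 @ [d, 1, 1, 2])"
              using slnm_eq[of 0 3 1 "y1 @ [d]" 1] a5 k3 by simp
            have SLA: "y1 @ [d, 1, 1, 2] \<in> asym_bracelets k n"
              using SLNM_g[of y1 d n] A a5 d2 y1ne hy1 k3 by simp
            show ?thesis
            proof (cases "in_set_opt (asym_bracelets k n) (first_non_min \<alpha>)")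
              case True
              have F: "first_non_min \<alpha> = Some (replicate z 0 @ 0 # s)" using fnm_eq[OF h] a h1 by simp
              then have FA: "replicate z 0 @ 0 # s \<in> asym_bracelets k n" using True by simp
              have P: "par k n \<alpha> = replicate z 0 @ 0 # s" using par_3[OF nL nS F FA] .
              show ?thesis using P FA fnm_M1[of k z s] a h1 by simp
            next
              case nF: False
              have P: "par k n \<alpha> = y1 @ [d, 1, 1, 2]" using par_4[OF nL nS nF SL SLA] .
              let ?p = "Suc (length y1)"
              have yz: "y ! z = 1" using yv hbv bvne by (simp add: nth_append hd_conv_nth)
              have zly: "z < length y" using ly_eq lbv by simp
              have yl: "y ! (length y - 1) = 0" using lasty yne by (simp add: last_conv_nth)
              have zp: "z < ?p"
              proof -
                have "z \<noteq> length y - 1" using yz yl by auto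
                then show ?thesis using zly ly1 ly3 by simp
              qed
              have pl: "?p < length \<alpha>" using a5 by simp
              have ap: "\<alpha> ! ?p = 0" using a5 by (simp add: nth_append)
              have upd: "\<alpha>[?p := Suc (\<alpha> ! ?p)] = y1 @ [d, 1, 1, 2]" using a5 ap by (simp add: list_update_append)
              have "Mless k \<alpha> (\<alpha>[?p := Suc (\<alpha> ! ?p)])"
                using inc_measure[OF a h zp pl] ap k by simp
              then show ?thesis using P SLA upd by simp
            qed
          qed
        qed
      qed
    qed
  qed
qed




lemma par_found:
  assumes "par k n \<alpha> \<noteq> \<alpha>"
  shows "\<exists>b. Some b \<in> set (par_candidates k \<alpha>) \<and> b \<in> asym_bracelets k n \<and> par k n \<alpha> = b"
proof -
  let ?P = "in_set_opt (asym_bracelets k n)" and ?L = "par_candidates k \<alpha>"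
  obtain oo where f: "find ?P ?L = Some oo"
  proof (cases "find ?P ?L")
    case None
    then have "par k n \<alpha> = \<alpha>" unfolding par_def by simp
    then show ?thesis using assms by simp
  next
    case (Some oo) then show ?thesis using that by blast
  qed
  then obtain i where i: "i < length ?L" "oo = ?L ! i" "?P oo" unfolding find_Some_iff by blast
  from i(3) obtain b where ob: "oo = Some b" by (cases oo) simp_all
  have "Some b \<in> set ?L" using i ob by (metis nth_mem)
  moreover have "b \<in> asym_bracelets k n" using i(3) unfolding ob by simp
  moreover have "par k n \<alpha> = b" using f ob unfolding par_def by simp
  ultimately show ?thesis by blast
qed

lemma cand_rot:
  assumes s: "\<alpha> \<in> strings k n" and k: "k \<ge> 2" and ne: "\<alpha> \<noteq> []"
    and c: "Some b \<in> set (par_candidates k \<alpha>)"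
  shows "\<exists>\<beta> \<in> rotations \<alpha>. \<exists>\<gamma> \<in> rotations b. hd \<beta> \<noteq> hd \<gamma> \<and> tl \<beta> = tl \<gamma>"
proof -
  have lt: "\<forall>x\<in>set \<alpha>. x < k" using s unfolding strings_iff by simp
  consider "last_non_max k \<alpha> = Some b" | "b = last_symbol k \<alpha>" | "first_non_min \<alpha> = Some b"
    | "second_last_non_max k \<alpha> = Some b"
    using c unfolding par_candidates_def by auto
  then show ?thesis
  proof cases
    case 1
    then obtain p where p: "p < length \<alpha>" "b = \<alpha>[p := Suc (\<alpha> ! p)]" using lnm_form by blast
    show ?thesis using rot_one[OF p(1), of "Suc (\<alpha> ! p)" b] p by simp
  next
    case 2
    let ?x = "(last \<alpha> + 1) mod k"
    have pl: "length \<alpha> - 1 < length \<alpha>" using ne by simp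
    have la: "\<alpha> ! (length \<alpha> - 1) = last \<alpha>" using ne by (simp add: last_conv_nth)
    have lk: "last \<alpha> < k" using lt ne by simp
    have "?x \<noteq> last \<alpha>"
    proof (cases "last \<alpha> + 1 < k")
      case True then show ?thesis by simp
    next
      case False then have "last \<alpha> + 1 = k" using lk by simp
      then show ?thesis using k by simp
    qed
    then show ?thesis using rot_one[OF pl, of ?x b] la ls_rot[OF ne, of k] 2 by simp
  next
    case 3
    then obtain p where p: "p < length \<alpha>" "\<alpha> ! p \<noteq> 0" "b = \<alpha>[p := \<alpha> ! p - 1]" using fnm_form by blast
    have "\<alpha> ! p - 1 \<noteq> \<alpha> ! p" using p(2) by simp
    then show ?thesis using rot_one[OF p(1), of "\<alpha> ! p - 1" b] p by simp
  next
    case 4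
    then obtain p where p: "p < length \<alpha>" "b = \<alpha>[p := Suc (\<alpha> ! p)]" using slnm_form by blast
    show ?thesis using rot_one[OF p(1), of "Suc (\<alpha> ! p)" b] p by simp
  qed
qed

lemma finite_A: "finite (asym_bracelets k n)"
proof -
  have "asym_bracelets k n \<subseteq> {xs. set xs \<subseteq> {..<k} \<and> length xs = n}"
    unfolding asym_bracelets_def strings_def by auto
  moreover have "finite {xs. set xs \<subseteq> {..<k} \<and> length xs = n}"
    by (rule finite_lists_length_eq) simp
  ultimately show ?thesis by (rule finite_subset)
qed

lemma reach:
  assumes n: "n \<ge> 3" and k: "k \<ge> 3"
  shows "\<alpha> \<in> asym_bracelets k n \<Longrightarrow> \<exists>t. (par k n ^^ t) \<alpha> = root_string n k"
proof (induction \<alpha> rule: measure_induct_rule[where f = "\<lambda>\<alpha>. card {\<beta> \<in> asym_bracelets k n. Mless k \<alpha> \<beta>}"])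
  case (less \<alpha>)
  show ?case
  proof (cases "\<alpha> = root_string n k")
    case True then show ?thesis by (intro exI[of _ 0]) simp
  next
    case False
    let ?p = "par k n \<alpha>"
    have kp: "?p \<in> asym_bracelets k n" "Mless k \<alpha> ?p" using key[OF n k less.prems False] by auto
    have sub: "{\<beta> \<in> asym_bracelets k n. Mless k ?p \<beta>} \<subset> {\<beta> \<in> asym_bracelets k n. Mless k \<alpha> \<beta>}"
    proof
      show "{\<beta> \<in> asym_bracelets k n. Mless k ?p \<beta>} \<subseteq> {\<beta> \<in> asym_bracelets k n. Mless k \<alpha> \<beta>}"
        using kp(2) Mless_trans by blast
      have "?p \<in> {\<beta> \<in> asym_bracelets k n. Mless k \<alpha> \<beta>}" using kp by simp
      moreover have "?p \<notin> {\<beta> \<in> asym_bracelets k n. Mless k ?p \<beta>}" using Mless_irrefl by simp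
      ultimately show "{\<beta> \<in> asym_bracelets k n. Mless k ?p \<beta>} \<noteq> {\<beta> \<in> asym_bracelets k n. Mless k \<alpha> \<beta>}"
        by blast
    qed
    have fin: "finite {\<beta> \<in> asym_bracelets k n. Mless k \<alpha> \<beta>}" using finite_A by simp
    have "card {\<beta> \<in> asym_bracelets k n. Mless k ?p \<beta>} < card {\<beta> \<in> asym_bracelets k n. Mless k \<alpha> \<beta>}"
      using psubset_card_mono[OF fin sub] .
    then obtain t where t: "(par k n ^^ t) ?p = root_string n k" using less.IH kp(1) by blast
    have "(par k n ^^ Suc t) \<alpha> = (par k n ^^ t) ?p" by (simp only: funpow_Suc_right comp_apply)
    then show ?thesis using t by metis
  qed
qed

theorem mainTheorem9:
  fixes n k :: nat
  assumes "n \<ge> 3" and "k \<ge> 3"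
  shows "root_string n k \<in> asym_bracelets k n
    \<and> (\<forall>\<alpha> \<in> asym_bracelets k n - {root_string n k}.
          (\<exists>c \<in> set (par_candidates k \<alpha>). in_set_opt (asym_bracelets k n) c)
        \<and> par k n \<alpha> \<in> asym_bracelets k n
        \<and> (\<exists>\<beta> \<in> rotations \<alpha>. \<exists>\<gamma> \<in> rotations (par k n \<alpha>).
              hd \<beta> \<noteq> hd \<gamma> \<and> tl \<beta> = tl \<gamma>))
    \<and> (\<forall>\<alpha> \<in> asym_bracelets k n. \<exists>t. (par k n ^^ t) \<alpha> = root_string n k)"
proof (intro conjI ballI)
  show "root_string n k \<in> asym_bracelets k n" using root_A assms by simp
next
  fix \<alpha> assume "\<alpha> \<in> asym_bracelets k n" then show "\<exists>t. (par k n ^^ t) \<alpha> = root_string n k"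
    using reach assms by blast
next
  fix \<alpha> assume a: "\<alpha> \<in> asym_bracelets k n - {root_string n k}"
  then have A: "\<alpha> \<in> asym_bracelets k n" and nr: "\<alpha> \<noteq> root_string n k" by auto
  have kp: "par k n \<alpha> \<in> asym_bracelets k n" "Mless k \<alpha> (par k n \<alpha>)" using key[OF assms A nr] by auto
  have "par k n \<alpha> \<noteq> \<alpha>" using kp(2) Mless_irrefl by metis
  then obtain b where b: "Some b \<in> set (par_candidates k \<alpha>)" "b \<in> asym_bracelets k n" "par k n \<alpha> = b"
    using par_found by blast
  show "\<exists>c \<in> set (par_candidates k \<alpha>). in_set_opt (asym_bracelets k n) c" using b by force
  show "par k n \<alpha> \<in> asym_bracelets k n" by (rule kp(1))
  have s: "\<alpha> \<in> strings k n" using A inA_strings by blast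
  have ne: "\<alpha> \<noteq> []" using s assms unfolding strings_iff by auto
  show "\<exists>\<beta> \<in> rotations \<alpha>. \<exists>\<gamma> \<in> rotations (par k n \<alpha>). hd \<beta> \<noteq> hd \<gamma> \<and> tl \<beta> = tl \<gamma>"
    using cand_rot[OF s _ ne b(1)] b(3) assms by simp
qed



end
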